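(* Let $k$ be a field, $A$ a finitely generated commutative $k$-algebra, $k_n=k[t]/(t^{n+1})$, and $B$ a $k_n$-algebra with an isomorphism $gr\,B\simeq A\otimes_kk_n$ such that $B$ induces a deformation of $D(A)$. Suppose there is a $k$-algebra homomorphism $s:D(A)\to D(B)$ with $\tau\circ s=\mathrm{id}$, where $\tau:D(B)\to D(A)$ is the residue map, and regard $B$ as a left $A\otimes_kk_n$-module via $a\cdot b=s(a)(b)$. Then $D({}_BB)=D({}_{A\otimes_kk_n}B)$ as subrings of $\operatorname{End}_{k_n}(B)$.
   Context: All differential operators are $k[t]$-linear. For a $k_n$-algebra $C$ and a left $C$-module $M$, $D({}_CM)=\bigcup_mD^m({}_CM)$ where $D^m({}_CM)=\{d\in\operatorname{End}_{k_n}(M): [f_m,\dots,[f_0,d]\dots]=0\ \forall f_0,\dots,f_m\in C\}$, with $f$ acting through the module structure and $[f,d]=fd-df$. $D({}_BB)$ uses the left multiplication of $B$ on itself; $D(B)=D({}_BB)$; $D(A)$ is the ring of $k$-linear differential operators on $A$, containing $A$. $gr$ is taken for the $t$-adic filtration. The map $\gamma:gr\,D(B)\to\operatorname{End}_{k_n}(gr\,B)$ sends the class of $d\in t^iD(B)$ to the endomorphism $t^jB/t^{j+1}B\to t^{i+j}B/t^{i+j+1}B$ induced by $d$; it lands in $D(gr\,B)$. $B$ induces a deformation of $D(A)$ if $\gamma:gr\,D(B)\to D(gr\,B)$ is an isomorphism; then $D(B)/tD(B)\simeq D(A)$, and $\tau$ is the induced residue map. *)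

theory Defs
  imports Main "HOL-Library.Function_Algebras"
begin

definition comm_op :: "('c \<Rightarrow> 'm \<Rightarrow> 'm) \<Rightarrow> 'c \<Rightarrow> ('m \<Rightarrow> 'm) \<Rightarrow> ('m \<Rightarrow> 'm::ab_group_add)" where
  "comm_op act f d = (\<lambda>x. act f (d x) - d (act f x))"

definition klin_end :: "'m set \<Rightarrow> ('k \<Rightarrow> 'm \<Rightarrow> 'm) \<Rightarrow> ('m::ab_group_add \<Rightarrow> 'm) set" where
  "klin_end M sc = {d. (\<forall>x\<in>M. d x \<in> M) \<and> (\<forall>x\<in>M. \<forall>y\<in>M. d (x + y) = d x + d y)
                        \<and> (\<forall>c. \<forall>x\<in>M. d (sc c x) = sc c (d x))}"

text \<open>k_n-linear endomorphisms: k-linear and commuting with the action tm of t.\<close>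
definition kn_end :: "'m set \<Rightarrow> ('k \<Rightarrow> 'm \<Rightarrow> 'm) \<Rightarrow> ('m \<Rightarrow> 'm) \<Rightarrow> ('m::ab_group_add \<Rightarrow> 'm) set" where
  "kn_end M sc tm = {d \<in> klin_end M sc. \<forall>x\<in>M. d (tm x) = tm (d x)}"

text \<open>D^m(_C M): fs = [f_0,...,f_m], fold computes [f_m,...,[f_0,d]...].\<close>
definition diffop_ord :: "'m set \<Rightarrow> ('m \<Rightarrow> 'm) set \<Rightarrow> ('c \<Rightarrow> 'm \<Rightarrow> 'm) \<Rightarrow> 'c set \<Rightarrow> nat
                          \<Rightarrow> ('m::ab_group_add \<Rightarrow> 'm) set" where
  "diffop_ord M E act C m = {d \<in> E. \<forall>fs. length fs = Suc m \<longrightarrow> set fs \<subseteq> C \<longrightarrow>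
                                 (\<forall>x\<in>M. fold (comm_op act) fs d x = 0)}"

definition diffops :: "'m set \<Rightarrow> ('m \<Rightarrow> 'm) set \<Rightarrow> ('c \<Rightarrow> 'm \<Rightarrow> 'm) \<Rightarrow> 'c set
                          \<Rightarrow> ('m::ab_group_add \<Rightarrow> 'm) set" where
  "diffops M E act C = (\<Union>m. diffop_ord M E act C m)"

definition ring_hom_fun :: "('x::ring_1 \<Rightarrow> 'y::ring_1) \<Rightarrow> bool" where
  "ring_hom_fun f \<longleftrightarrow> (\<forall>x y. f (x + y) = f x + f y) \<and> (\<forall>x y. f (x * y) = f x * f y) \<and> f 1 = 1"

inductive_set alg_gen :: "('k \<Rightarrow> 'a::comm_ring_1) \<Rightarrow> 'a set \<Rightarrow> 'a set" for iA S where
  gen: "x \<in> S \<Longrightarrow> x \<in> alg_gen iA S"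
| scal: "iA c \<in> alg_gen iA S"
| add: "x \<in> alg_gen iA S \<Longrightarrow> y \<in> alg_gen iA S \<Longrightarrow> x + y \<in> alg_gen iA S"
| mult: "x \<in> alg_gen iA S \<Longrightarrow> y \<in> alg_gen iA S \<Longrightarrow> x * y \<in> alg_gen iA S"

definition fin_gen_alg :: "('k \<Rightarrow> 'a::comm_ring_1) \<Rightarrow> bool" where
  "fin_gen_alg iA \<longleftrightarrow> (\<exists>S. finite S \<and> alg_gen iA S = UNIV)"

definition D_A :: "('k \<Rightarrow> 'a::comm_ring_1) \<Rightarrow> ('a \<Rightarrow> 'a) set" where
  "D_A iA = diffops UNIV (klin_end UNIV (\<lambda>c x. iA c * x)) (\<lambda>f x. f * x) UNIV"

definition End_B :: "('k \<Rightarrow> 'b::ring_1) \<Rightarrow> 'b \<Rightarrow> ('b \<Rightarrow> 'b) set" where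
  "End_B iB t = kn_end UNIV (\<lambda>c x. iB c * x) (\<lambda>x. t * x)"

definition D_B :: "('k \<Rightarrow> 'b::ring_1) \<Rightarrow> 'b \<Rightarrow> ('b \<Rightarrow> 'b) set" where
  "D_B iB t = diffops UNIV (End_B iB t) (\<lambda>f x. f * x) UNIV"

definition tpow_set :: "'b::ring_1 \<Rightarrow> nat \<Rightarrow> 'b set" where
  "tpow_set t j = {t ^ j * b | b. True}"

definition tD :: "('k \<Rightarrow> 'b::ring_1) \<Rightarrow> 'b \<Rightarrow> nat \<Rightarrow> ('b \<Rightarrow> 'b) set" where
  "tD iB t i = {(\<lambda>x. t ^ i * d x) | d. d \<in> D_B iB t}"

section \<open>A \<otimes>_k k_n = A[t]/(t^(n+1)), as coefficient functions supported in {0..n}\<close>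

definition tens :: "nat \<Rightarrow> (nat \<Rightarrow> 'a::comm_ring_1) set" where
  "tens n = {p. \<forall>j>n. p j = 0}"

definition tens_mult :: "nat \<Rightarrow> (nat \<Rightarrow> 'a::comm_ring_1) \<Rightarrow> (nat \<Rightarrow> 'a) \<Rightarrow> (nat \<Rightarrow> 'a)" where
  "tens_mult n p q = (\<lambda>j. if j \<le> n then (\<Sum>i\<le>j. p i * q (j - i)) else 0)"

definition tens_shift :: "nat \<Rightarrow> (nat \<Rightarrow> 'a::comm_ring_1) \<Rightarrow> (nat \<Rightarrow> 'a)" where
  "tens_shift n p = (\<lambda>j. if j = 0 \<or> n < j then 0 else p (j - 1))"

text \<open>D(A \<otimes> k_n), k_n-linear (this is D(gr B) transported along gr B \<simeq> A \<otimes> k_n).\<close>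
definition D_tens :: "('k \<Rightarrow> 'a::comm_ring_1) \<Rightarrow> nat \<Rightarrow> ((nat \<Rightarrow> 'a) \<Rightarrow> (nat \<Rightarrow> 'a)) set" where
  "D_tens iA n = diffops (tens n) (kn_end (tens n) (\<lambda>c p j. iA c * p j) (tens_shift n))
                   (tens_mult n) (tens n)"

text \<open>phi j : t^j B \<rightarrow> A is the degree-j component (vanishing on t^(j+1) B) of a graded
  k_n-algebra isomorphism gr B \<rightarrow> A \<otimes> k_n, class of b in t^jB/t^(j+1)B \<mapsto> phi j b \<cdot> t^j.\<close>
definition gr_iso :: "('k \<Rightarrow> 'a::comm_ring_1) \<Rightarrow> ('k \<Rightarrow> 'b::ring_1) \<Rightarrow> 'b \<Rightarrow> nat
                        \<Rightarrow> (nat \<Rightarrow> 'b \<Rightarrow> 'a) \<Rightarrow> bool" where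
  "gr_iso iA iB t n phi \<longleftrightarrow>
     (\<forall>j\<le>n. (\<forall>x\<in>tpow_set t j. \<forall>y\<in>tpow_set t j. phi j (x + y) = phi j x + phi j y)
           \<and> (\<forall>c. \<forall>x\<in>tpow_set t j. phi j (iB c * x) = iA c * phi j x)
           \<and> phi j ` tpow_set t j = UNIV
           \<and> {x \<in> tpow_set t j. phi j x = 0} = tpow_set t (Suc j))
   \<and> (\<forall>i j. i + j \<le> n \<longrightarrow> (\<forall>x\<in>tpow_set t i. \<forall>y\<in>tpow_set t j.
                               phi (i + j) (x * y) = phi i x * phi j y))
   \<and> phi 0 1 = 1
   \<and> (\<forall>j<n. \<forall>x\<in>tpow_set t j. phi (Suc j) (t * x) = phi j x)"

text \<open>gamma on the degree-i piece t^i D(B)/t^(i+1) D(B), transported to A \<otimes> k_n: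
  sends a t^j to phi (i+j) (d b) t^(i+j), where b \<in> t^j B with phi j b = a.\<close>
definition gamma_phi :: "'b::ring_1 \<Rightarrow> (nat \<Rightarrow> 'b \<Rightarrow> 'a::comm_ring_1) \<Rightarrow> nat \<Rightarrow> nat
                          \<Rightarrow> ('b \<Rightarrow> 'b) \<Rightarrow> (nat \<Rightarrow> 'a) \<Rightarrow> (nat \<Rightarrow> 'a)" where
  "gamma_phi t phi n i d = (\<lambda>p m. if i \<le> m \<and> m \<le> n
       then phi m (d (SOME b. b \<in> tpow_set t (m - i) \<and> phi (m - i) b = p (m - i))) else 0)"

text \<open>B induces a deformation of D(A): gamma : gr D(B) = \<Oplus>_{i\<le>n} t^iD(B)/t^(i+1)D(B) \<rightarrow> D(gr B)
  is injective and surjective.\<close>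
definition induces_deformation :: "('k \<Rightarrow> 'a::comm_ring_1) \<Rightarrow> ('k \<Rightarrow> 'b::ring_1) \<Rightarrow> 'b \<Rightarrow> nat
                        \<Rightarrow> (nat \<Rightarrow> 'b \<Rightarrow> 'a) \<Rightarrow> bool" where
  "induces_deformation iA iB t n phi \<longleftrightarrow>
     (\<forall>ds. (\<forall>i\<le>n. ds i \<in> tD iB t i)
           \<and> (\<forall>p\<in>tens n. \<forall>m. (\<Sum>i\<le>n. gamma_phi t phi n i (ds i) p m) = 0)
           \<longrightarrow> (\<forall>i\<le>n. ds i \<in> tD iB t (Suc i)))
   \<and> (\<forall>E\<in>D_tens iA n. \<exists>ds. (\<forall>i\<le>n. ds i \<in> tD iB t i)
           \<and> (\<forall>p\<in>tens n. \<forall>m. E p m = (\<Sum>i\<le>n. gamma_phi t phi n i (ds i) p m)))"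

text \<open>Residue map tau : D(B) \<rightarrow> D(A), d \<mapsto> operator induced by d on B/tB \<simeq> A.\<close>
definition residue :: "(nat \<Rightarrow> 'b \<Rightarrow> 'a) \<Rightarrow> ('b \<Rightarrow> 'b) \<Rightarrow> ('a \<Rightarrow> 'a)" where
  "residue phi d = (\<lambda>a. phi 0 (d (SOME b. phi 0 b = a)))"

definition act_tens :: "'b::ring_1 \<Rightarrow> nat \<Rightarrow> (('a::comm_ring_1 \<Rightarrow> 'a) \<Rightarrow> ('b \<Rightarrow> 'b))
                          \<Rightarrow> (nat \<Rightarrow> 'a) \<Rightarrow> 'b \<Rightarrow> 'b" where
  "act_tens t n s = (\<lambda>f b. \<Sum>j\<le>n. t ^ j * s (\<lambda>x. f j * x) b)"

end

theory Submission
  imports Defs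
begin



definition ad :: "('m \<Rightarrow> 'm) \<Rightarrow> ('m \<Rightarrow> 'm) \<Rightarrow> ('m \<Rightarrow> 'm::ab_group_add)" where
  "ad z d = (\<lambda>x. z (d x) - d (z x))"

definition addf :: "('m::ab_group_add \<Rightarrow> 'm) \<Rightarrow> bool" where
  "addf f \<longleftrightarrow> (\<forall>x y. f (x + y) = f x + f y)"

fun ordZ :: "('m \<Rightarrow> 'm) set \<Rightarrow> nat \<Rightarrow> ('m::ab_group_add \<Rightarrow> 'm) \<Rightarrow> bool" where
  "ordZ Z 0 d = (d = (\<lambda>x. 0))"
| "ordZ Z (Suc m) d = (\<forall>z\<in>Z. ordZ Z m (ad z d))"

lemma ordZ_SucI: "(\<And>z. z \<in> Z \<Longrightarrow> ordZ Z m (ad z d)) \<Longrightarrow> ordZ Z (Suc m) d"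
  by simp

lemma addf_0: "addf f \<Longrightarrow> f 0 = 0"
  unfolding addf_def by (metis add_cancel_right_right)

lemma addf_neg: "addf f \<Longrightarrow> f (- x) = - f x"
  unfolding addf_def by (metis add.right_inverse addf_0 addf_def eq_neg_iff_add_eq_0)

lemma addf_diff: "addf f \<Longrightarrow> f (x - y) = f x - f y"
  by (metis addf_def addf_neg diff_conv_add_uminus)

lemma addf_sum: "addf f \<Longrightarrow> f (\<Sum>i\<in>I. g i) = (\<Sum>i\<in>I. f (g i))"
  by (induction I rule: infinite_finite_induct) (auto simp: addf_0 addf_def)

lemma addf_ad: "addf z \<Longrightarrow> addf u \<Longrightarrow> addf (ad z u)"
  unfolding addf_def ad_def by (simp add: algebra_simps)

lemma addf_comp: "addf z \<Longrightarrow> addf u \<Longrightarrow> addf (z \<circ> u)"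
  unfolding addf_def by simp

lemma addf_comp': "addf z \<Longrightarrow> addf u \<Longrightarrow> addf (\<lambda>x. z (u x))"
  unfolding addf_def by simp

lemma addf_plus: "addf z \<Longrightarrow> addf u \<Longrightarrow> addf (\<lambda>x. z x + u x)"
  unfolding addf_def by (simp add: algebra_simps)

lemma addf_minus: "addf z \<Longrightarrow> addf u \<Longrightarrow> addf (\<lambda>x. z x - u x)"
  unfolding addf_def by (simp add: algebra_simps)

lemma ad_zero: "addf z \<Longrightarrow> ad z (\<lambda>x. 0) = (\<lambda>x. 0)"
  unfolding ad_def by (simp add: addf_0)

lemma ordZ_zero: "\<forall>z\<in>Z. addf z \<Longrightarrow> ordZ Z m (\<lambda>x. 0)"
  by (induction m) (auto simp: ad_zero)

lemma ordZ_add: "\<forall>z\<in>Z. addf z \<Longrightarrow> ordZ Z m u \<Longrightarrow> ordZ Z m v \<Longrightarrow> ordZ Z m (\<lambda>x. u x + v x)"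
proof (induction m arbitrary: u v)
  case 0 then show ?case by simp
next
  case (Suc m)
  show ?case
  proof (simp, intro ballI)
    fix z assume z: "z \<in> Z"
    have "ad z (\<lambda>x. u x + v x) = (\<lambda>x. ad z u x + ad z v x)"
      using Suc.prems(1) z unfolding ad_def addf_def by (auto simp: algebra_simps)
    then show "ordZ Z m (ad z (\<lambda>x. u x + v x))" using Suc z by simp
  qed
qed

lemma ordZ_neg: "\<forall>z\<in>Z. addf z \<Longrightarrow> ordZ Z m u \<Longrightarrow> ordZ Z m (\<lambda>x. - u x)"
proof (induction m arbitrary: u)
  case 0 then show ?case by simp
next
  case (Suc m)
  show ?case
  proof (simp, intro ballI)
    fix z assume z: "z \<in> Z"
    have "ad z (\<lambda>x. - u x) = (\<lambda>x. - ad z u x)"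
      using Suc.prems(1) z unfolding ad_def by (auto simp: addf_neg)
    then show "ordZ Z m (ad z (\<lambda>x. - u x))" using Suc z by simp
  qed
qed

lemma ordZ_diff: "\<forall>z\<in>Z. addf z \<Longrightarrow> ordZ Z m u \<Longrightarrow> ordZ Z m v \<Longrightarrow> ordZ Z m (\<lambda>x. u x - v x)"
  using ordZ_add[of Z m u "\<lambda>x. - v x"] ordZ_neg[of Z m v] by simp

lemma ordZ_sum: assumes "\<forall>z\<in>Z. addf z" "finite I" "\<forall>i\<in>I. ordZ Z m (F i)" shows "ordZ Z m (\<lambda>x. \<Sum>i\<in>I. F i x)"
  using assms(2,3)
proof (induction I rule: finite_induct)
  case empty then show ?case using ordZ_zero[OF assms(1), of m] by simp
next
  case (insert i I)
  then show ?case using ordZ_add[OF assms(1), of m "F i" "\<lambda>x. \<Sum>i\<in>I. F i x"] by simp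
qed

lemma ordZ_mono: "\<forall>z\<in>Z. addf z \<Longrightarrow> ordZ Z m d \<Longrightarrow> m \<le> m' \<Longrightarrow> ordZ Z m' d"
proof (induction m arbitrary: d m')
  case 0 then show ?case using ordZ_zero by auto
next
  case (Suc m)
  then obtain m'' where "m' = Suc m''" "m \<le> m''" by (cases m') auto
  then show ?case using Suc by auto
qed

lemma ordZ_set_mono: "Z' \<subseteq> Z \<Longrightarrow> ordZ Z m d \<Longrightarrow> ordZ Z' m d"
  by (induction m arbitrary: d) auto

lemma ordZ_lmul:
  assumes "\<forall>z\<in>Z. addf z" "addf w" "\<forall>z\<in>Z. \<forall>x. z (w x) = w (z x)"
  shows "ordZ Z m u \<Longrightarrow> ordZ Z m (w \<circ> u)"
proof (induction m arbitrary: u)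
  case 0 then show ?case using addf_0[OF assms(2)] by (auto simp: comp_def)
next
  case (Suc m)
  show ?case
  proof (rule ordZ_SucI)
    fix z assume z: "z \<in> Z"
    have "ad z (w \<circ> u) = w \<circ> ad z u"
      using assms z unfolding ad_def by (auto simp: addf_diff)
    moreover have "ordZ Z m (ad z u)" using Suc.prems z by simp
    ultimately show "ordZ Z m (ad z (w \<circ> u))" using Suc.IH by metis
  qed
qed

lemma ordZ_rmul:
  assumes "\<forall>z\<in>Z. \<forall>x. z (w x) = w (z x)"
  shows "ordZ Z m u \<Longrightarrow> ordZ Z m (u \<circ> w)"
proof (induction m arbitrary: u)
  case 0 then show ?case by (auto simp: comp_def)
next
  case (Suc m)
  show ?case
  proof (rule ordZ_SucI)
    fix z assume z: "z \<in> Z"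
    have "ad z (u \<circ> w) = ad z u \<circ> w"
      using assms z unfolding ad_def by auto
    moreover have "ordZ Z m (ad z u)" using Suc.prems z by simp
    ultimately show "ordZ Z m (ad z (u \<circ> w))" using Suc.IH by metis
  qed
qed

lemma ad_comp_right: "addf u \<Longrightarrow> ad z (u \<circ> v) = (\<lambda>x. (ad z u \<circ> v) x + (u \<circ> ad z v) x)"
  unfolding ad_def by (auto simp: addf_diff)

lemma ordZ_comp_aux:
  assumes Z: "\<forall>z\<in>Z. addf z"
  shows "a + b = N \<Longrightarrow> addf u \<Longrightarrow> addf v \<Longrightarrow> ordZ Z (Suc a) u \<Longrightarrow> ordZ Z (Suc b) v
     \<Longrightarrow> ordZ Z (Suc N) (u \<circ> v)"
proof (induction N arbitrary: a b u v)
  case 0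
  then have "a = 0" "b = 0" by auto
  show ?case
  proof (rule ordZ_SucI)
    fix z assume z: "z \<in> Z"
    have "ad z u = (\<lambda>x. 0)" "ad z v = (\<lambda>x. 0)" using 0 z \<open>a = 0\<close> \<open>b = 0\<close> by auto
    then have "ad z (u \<circ> v) = (\<lambda>x. 0)" using ad_comp_right[OF \<open>addf u\<close>, of z v] 0 addf_0
      by (auto simp: comp_def)
    then show "ordZ Z 0 (ad z (u \<circ> v))" by simp
  qed
next
  case (Suc N)
  note IH = Suc.IH and prems = Suc.prems
  show ?case
  proof (rule ordZ_SucI)
    fix z assume z: "z \<in> Z"
    have az: "addf z" using Z z by auto
    have h1: "ordZ Z (Suc N) (ad z u \<circ> v)"
    proof (cases a)
      case 0
      then have "ad z u \<circ> v = (\<lambda>x. 0)" using prems z by (auto simp: comp_def)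
      then show ?thesis using ordZ_zero[OF Z] by metis
    next
      case (Suc a')
      have o1: "ordZ Z (Suc a') (ad z u)" using prems(4) z Suc by simp
      have "a' + b = N" using prems(1) Suc by simp
      from IH[OF this addf_ad[OF az prems(2)] prems(3) o1 prems(5)] show ?thesis .
    qed
    have h2: "ordZ Z (Suc N) (u \<circ> ad z v)"
    proof (cases b)
      case 0
      then have "u \<circ> ad z v = (\<lambda>x. 0)" using prems z addf_0[OF \<open>addf u\<close>] by (auto simp: comp_def)
      then show ?thesis using ordZ_zero[OF Z] by metis
    next
      case (Suc b')
      have o1: "ordZ Z (Suc b') (ad z v)" using prems(5) z Suc by simp
      have "a + b' = N" using prems(1) Suc by simp
      from IH[OF this prems(2) addf_ad[OF az prems(3)] prems(4) o1] show ?thesis .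
    qed
    show "ordZ Z (Suc N) (ad z (u \<circ> v))"
      using ordZ_add[OF Z h1 h2] ad_comp_right[OF \<open>addf u\<close>, of z v] by simp
  qed
qed

lemma ordZ_comp:
  assumes "\<forall>z\<in>Z. addf z" "addf u" "addf v" "ordZ Z (Suc a) u" "ordZ Z (Suc b) v"
  shows "ordZ Z (Suc (a + b)) (u \<circ> v)"
  using ordZ_comp_aux[OF assms(1) refl assms(2-)] .

lemma comm_op_ad: "comm_op act f d = ad (act f) d"
  unfolding comm_op_def ad_def ..

lemma comm_op_ad': "comm_op act = (\<lambda>f. ad (act f))"
  unfolding comm_op_def ad_def by (intro ext) simp

lemma fold_char:
  "(\<forall>fs. length fs = m \<longrightarrow> set fs \<subseteq> C \<longrightarrow> (\<forall>x\<in>UNIV. fold (comm_op act) fs d x = 0))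
     \<longleftrightarrow> ordZ (act ` C) m d"
  unfolding comm_op_ad'
proof (induction m arbitrary: d)
  case 0
  then show ?case by (auto simp: fun_eq_iff)
next
  case (Suc m)
  show ?case
  proof
    assume H: "\<forall>fs. length fs = Suc m \<longrightarrow> set fs \<subseteq> C \<longrightarrow> (\<forall>x\<in>UNIV. fold (\<lambda>f. ad (act f)) fs d x = 0)"
    show "ordZ (act ` C) (Suc m) d"
    proof (rule ordZ_SucI)
      fix z assume "z \<in> act ` C"
      then obtain f where f: "f \<in> C" "z = act f" by auto
      have "\<forall>fs. length fs = m \<longrightarrow> set fs \<subseteq> C \<longrightarrow> (\<forall>x\<in>UNIV. fold (\<lambda>f. ad (act f)) fs (ad (act f) d) x = 0)"
        using H f(1) by (metis fold_Cons comp_apply insert_subset length_Cons list.simps(15))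
      then show "ordZ (act ` C) m (ad z d)" using Suc.IH[of "ad (act f) d"] f by simp
    qed
  next
    assume H: "ordZ (act ` C) (Suc m) d"
    show "\<forall>fs. length fs = Suc m \<longrightarrow> set fs \<subseteq> C \<longrightarrow> (\<forall>x\<in>UNIV. fold (\<lambda>f. ad (act f)) fs d x = 0)"
    proof (intro allI impI)
      fix fs :: "'a list" assume l: "length fs = Suc m" and s: "set fs \<subseteq> C"
      then obtain f fs' where fs: "fs = f # fs'" by (cases fs) auto
      have "ordZ (act ` C) m (ad (act f) d)" using H s fs by simp
      then have "\<forall>x\<in>UNIV. fold (\<lambda>f. ad (act f)) fs' (ad (act f) d) x = 0"
        using Suc.IH[of "ad (act f) d"] l s fs by auto
      then show "\<forall>x\<in>UNIV. fold (\<lambda>f. ad (act f)) fs d x = 0" using fs by simp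
    qed
  qed
qed

lemma diffops_char: "diffops UNIV E act C = {d \<in> E. \<exists>m. ordZ (act ` C) (Suc m) d}"
  unfolding diffops_def diffop_ord_def using fold_char[of "Suc _" C act] by blast




inductive_set clo :: "('m \<Rightarrow> 'm) set \<Rightarrow> ('m \<Rightarrow> 'm::ab_group_add) set" for G where
  cg: "g \<in> G \<Longrightarrow> g \<in> clo G"
| cadd: "x \<in> clo G \<Longrightarrow> y \<in> clo G \<Longrightarrow> (\<lambda>v. x v + y v) \<in> clo G"
| ccomp: "x \<in> clo G \<Longrightarrow> y \<in> clo G \<Longrightarrow> x \<circ> y \<in> clo G"

lemma clo_addf: assumes "\<forall>g\<in>G. addf g" shows "x \<in> clo G \<Longrightarrow> addf x"
  by (induction x rule: clo.induct) (use assms in \<open>auto intro: addf_plus addf_comp addf_comp'\<close>)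

lemma clo_comm1:
  assumes "\<forall>g\<in>G. addf g" "\<forall>g\<in>G. \<forall>h\<in>G. g \<circ> h = h \<circ> g"
  shows "x \<in> clo G \<Longrightarrow> \<forall>g\<in>G. x \<circ> g = g \<circ> x"
proof (induction x rule: clo.induct)
  case (cg g) then show ?case using assms by auto
next
  case (cadd x y)
  show ?case
  proof
    fix g assume g: "g \<in> G"
    have "\<And>v. x (g v) = g (x v)" "\<And>v. y (g v) = g (y v)" using cadd g by (metis comp_apply)+
    then show "(\<lambda>v. x v + y v) \<circ> g = g \<circ> (\<lambda>v. x v + y v)"
      using assms(1) g by (auto simp: addf_def)
  qed
next
  case (ccomp x y)
  then show ?case by (metis comp_assoc)
qed

lemma clo_comm:
  assumes "\<forall>g\<in>G. addf g" "\<forall>g\<in>G. \<forall>h\<in>G. g \<circ> h = h \<circ> g"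
  shows "y \<in> clo G \<Longrightarrow> x \<in> clo G \<Longrightarrow> x \<circ> y = y \<circ> x"
proof (induction y rule: clo.induct)
  case (cg g) then show ?case using clo_comm1[OF assms] by auto
next
  case (cadd y1 y2)
  have "\<And>v. x (y1 v) = y1 (x v)" "\<And>v. x (y2 v) = y2 (x v)" using cadd by (metis comp_apply)+
  then show ?case using clo_addf[OF assms(1) cadd.prems] by (auto simp: addf_def)
next
  case (ccomp y1 y2)
  then show ?case by (metis comp_assoc)
qed

lemma clo_ad:
  assumes G: "\<forall>g\<in>G. addf g" and C: "\<forall>g\<in>G. \<forall>h\<in>G. g \<circ> h = h \<circ> g"
  shows "x \<in> clo G \<Longrightarrow> addf u \<Longrightarrow> ordZ G (Suc m) u \<Longrightarrow> ordZ G m (ad x u)"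
proof (induction x arbitrary: u rule: clo.induct)
  case (cg g) then show ?case by simp
next
  case (cadd x y)
  have "ad (\<lambda>v. x v + y v) u = (\<lambda>v. ad x u v + ad y u v)"
    using cadd.prems(1) unfolding ad_def addf_def by (auto simp: algebra_simps)
  then show ?case using ordZ_add[OF G cadd.IH(1)[OF cadd.prems] cadd.IH(2)[OF cadd.prems]] by simp
next
  case (ccomp x y)
  have ax: "addf x" using clo_addf[OF G ccomp.hyps(1)] .
  have eq: "ad (x \<circ> y) u = (\<lambda>v. (x \<circ> ad y u) v + (ad x u \<circ> y) v)"
    using ax unfolding ad_def by (auto simp: addf_diff)
  have cx: "\<forall>z\<in>G. \<forall>v. z (x v) = x (z v)" using clo_comm1[OF G C ccomp.hyps(1)] by (metis comp_apply)
  have cy: "\<forall>z\<in>G. \<forall>v. z (y v) = y (z v)" using clo_comm1[OF G C ccomp.hyps(2)] by (metis comp_apply)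
  have h1: "ordZ G m (x \<circ> ad y u)" using ordZ_lmul[OF G ax cx ccomp.IH(2)[OF ccomp.prems]] .
  have h2: "ordZ G m (ad x u \<circ> y)" using ordZ_rmul[OF cy ccomp.IH(1)[OF ccomp.prems]] .
  show ?case unfolding eq by (rule ordZ_add[OF G h1 h2])
qed

lemma clo_ordZ:
  assumes G: "\<forall>g\<in>G. addf g" and C: "\<forall>g\<in>G. \<forall>h\<in>G. g \<circ> h = h \<circ> g"
  shows "addf u \<Longrightarrow> ordZ G m u \<Longrightarrow> ordZ (clo G) m u"
proof (induction m arbitrary: u)
  case 0 then show ?case by simp
next
  case (Suc m)
  show ?case
  proof (rule ordZ_SucI)
    fix x assume x: "x \<in> clo G"
    have "addf (ad x u)" using addf_ad[OF clo_addf[OF G x] Suc.prems(1)] .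
    then show "ordZ (clo G) m (ad x u)" using Suc.IH clo_ad[OF G C x Suc.prems] by blast
  qed
qed

section \<open>t-linear operators and the weight lemma\<close>

definition tlin :: "'b::ring_1 \<Rightarrow> ('b \<Rightarrow> 'b) \<Rightarrow> bool" where
  "tlin t f \<longleftrightarrow> (\<forall>x. f (t * x) = t * f x)"

definition gop :: "'b::ring_1 \<Rightarrow> ('b \<Rightarrow> 'b) \<Rightarrow> bool" where
  "gop t f \<longleftrightarrow> addf f \<and> tlin t f"

definition tp :: "nat \<Rightarrow> 'b::ring_1 \<Rightarrow> (nat \<Rightarrow> 'b \<Rightarrow> 'b) \<Rightarrow> 'b \<Rightarrow> 'b" where
  "tp n t S = (\<lambda>x. \<Sum>k\<le>n. t ^ k * S k x)"

lemma tlin_pow: "tlin t f \<Longrightarrow> f (t ^ k * x) = t ^ k * f x"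
  by (induction k arbitrary: x) (auto simp: tlin_def mult.assoc)

lemma gop_ad: "gop t f \<Longrightarrow> gop t g \<Longrightarrow> gop t (ad f g)"
  unfolding gop_def tlin_def using addf_ad by (auto simp: ad_def algebra_simps)

lemma gop_comp: "gop t f \<Longrightarrow> gop t g \<Longrightarrow> gop t (f \<circ> g)"
  unfolding gop_def tlin_def using addf_comp by auto

lemma gop_plus: "gop t f \<Longrightarrow> gop t g \<Longrightarrow> gop t (\<lambda>x. f x + g x)"
  unfolding gop_def tlin_def using addf_plus by (auto simp: algebra_simps)

lemma gop_minus: "gop t f \<Longrightarrow> gop t g \<Longrightarrow> gop t (\<lambda>x. f x - g x)"
  unfolding gop_def tlin_def using addf_minus by (auto simp: algebra_simps)

lemma gop_zero: "gop t (\<lambda>x. 0)"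
  unfolding gop_def tlin_def addf_def by auto

lemma gop_lmul: assumes "c * t = t * c" "gop t f" shows "gop t (\<lambda>x. c * f x)"
proof -
  have "c * f (t * x) = t * (c * f x)" for x
  proof -
    have "c * f (t * x) = c * (t * f x)" using assms(2) by (simp add: gop_def tlin_def)
    also have "\<dots> = (c * t) * f x" by (simp add: mult.assoc)
    also have "\<dots> = t * (c * f x)" using assms(1) by (simp add: mult.assoc)
    finally show ?thesis .
  qed
  then show ?thesis using assms(2) unfolding gop_def tlin_def addf_def by (simp add: distrib_left)
qed

lemma gop_tpow: "gop t f \<Longrightarrow> gop t (\<lambda>x. t ^ k * f x)"
  by (rule gop_lmul) (simp_all add: power_commutes)

lemma gop_sum: "finite I \<Longrightarrow> (\<forall>i\<in>I. gop t (F i)) \<Longrightarrow> gop t (\<lambda>x. \<Sum>i\<in>I. F i x)"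
proof (induction I rule: finite_induct)
  case empty then show ?case using gop_zero by simp
next
  case (insert i I) then show ?case using gop_plus[of t "F i" "\<lambda>x. \<Sum>i\<in>I. F i x"] by simp
qed

lemma gop_tp: "\<forall>l. gop t (S l) \<Longrightarrow> gop t (tp n t S)"
  unfolding tp_def by (rule gop_sum) (auto intro: gop_tpow)





lemma ad_tp_tk:
  assumes S: "\<forall>l. gop t (S l)" and u: "gop t u"
  shows "ad (tp n t S) (\<lambda>x. t ^ k * u x) = (\<lambda>x. \<Sum>l\<le>n. t ^ (k + l) * ad (S l) u x)"
proof
  fix x
  have au: "addf u" and tu: "tlin t u" using u by (auto simp: gop_def)
  have "ad (tp n t S) (\<lambda>x. t ^ k * u x) x = (\<Sum>l\<le>n. t ^ l * S l (t ^ k * u x)) - t ^ k * u (\<Sum>l\<le>n. t ^ l * S l x)"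
    by (simp add: ad_def tp_def)
  also have "\<dots> = (\<Sum>l\<le>n. t ^ (k + l) * S l (u x)) - (\<Sum>l\<le>n. t ^ (k + l) * u (S l x))"
  proof -
    have "(\<Sum>l\<le>n. t ^ l * S l (t ^ k * u x)) = (\<Sum>l\<le>n. t ^ (k + l) * S l (u x))"
      proof (intro sum.cong refl)
      fix l
      have "S l (t ^ k * u x) = t ^ k * S l (u x)" using S tlin_pow[of t "S l"] by (simp add: gop_def)
      then show "t ^ l * S l (t ^ k * u x) = t ^ (k + l) * S l (u x)"
        by (simp add: mult.assoc[symmetric] power_add[symmetric] add.commute)
    qed
    moreover have "t ^ k * u (\<Sum>l\<le>n. t ^ l * S l x) = (\<Sum>l\<le>n. t ^ (k + l) * u (S l x))"
      by (simp add: addf_sum[OF au] sum_distrib_left tlin_pow[OF tu] mult.assoc[symmetric] power_add[symmetric])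
    ultimately show ?thesis by simp
  qed
  also have "\<dots> = (\<Sum>l\<le>n. t ^ (k + l) * ad (S l) u x)"
    by (simp add: ad_def sum_subtractf right_diff_distrib)
  finally show "ad (tp n t S) (\<lambda>x. t ^ k * u x) x = (\<Sum>l\<le>n. t ^ (k + l) * ad (S l) u x)" .
qed

lemma ordZ_tpow:
  assumes "\<forall>z\<in>Z. gop t z" "ordZ Z m u"
  shows "ordZ Z m (\<lambda>x. t ^ k * u x)"
proof -
  have "ordZ Z m ((\<lambda>x. t ^ k * x) \<circ> u)"
    by (rule ordZ_lmul) (use assms in \<open>auto simp: gop_def addf_def distrib_left tlin_pow\<close>)
  then show ?thesis by (simp add: comp_def)
qed

lemma weight:
  fixes t :: "'b::ring_1"
  assumes tn: "t ^ Suc n = 0"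
    and Zg: "\<forall>z\<in>Z. gop t z" and Gg: "\<forall>g\<in>G. gop t g"
    and Gp: "\<forall>g\<in>G. (\<forall>u. gop t u \<longrightarrow> ad g u = (\<lambda>x. 0)) \<or>
       (\<exists>S. g = tp n t S \<and> S 0 \<in> Z \<and> (\<forall>l. gop t (S l)) \<and> (\<forall>l. 1 \<le> l \<longrightarrow> ordZ Z (c * l) (S l)))"
  shows "gop t u \<Longrightarrow> ordZ Z j u \<Longrightarrow> j + c * (Suc n - k) \<le> N \<Longrightarrow> ordZ G N (\<lambda>x. t ^ k * u x)"
proof (induction N arbitrary: k j u)
  case 0
  then have "u = (\<lambda>x. 0)" by simp
  then show ?case by simp
next
  case (Suc N)
  have Za: "\<forall>z\<in>Z. addf z" and Ga: "\<forall>g\<in>G. addf g" using Zg Gg by (auto simp: gop_def)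
  show ?case
  proof (cases j)
    case 0
    then have "(\<lambda>x. t ^ k * u x) = (\<lambda>x. 0)" using Suc.prems by simp
    then show ?thesis using ordZ_zero[OF Ga] by metis
  next
    case (Suc j')
    note jS = this
    show ?thesis
    proof (rule ordZ_SucI)
      fix g assume g: "g \<in> G"
      have gu: "gop t (\<lambda>x. t ^ k * u x)" using gop_tpow[OF Suc.prems(1)] .
      have disj: "(\<forall>u. gop t u \<longrightarrow> ad g u = (\<lambda>x. 0)) \<or>
       (\<exists>S. g = tp n t S \<and> S 0 \<in> Z \<and> (\<forall>l. gop t (S l)) \<and> (\<forall>l. 1 \<le> l \<longrightarrow> ordZ Z (c * l) (S l)))"
        using Gp g by blast
      show "ordZ G N (ad g (\<lambda>x. t ^ k * u x))"
      proof (rule disjE[OF disj])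
        assume "\<forall>u. gop t u \<longrightarrow> ad g u = (\<lambda>x. 0)"
        then have "ad g (\<lambda>x. t ^ k * u x) = (\<lambda>x. 0)" using gu by simp
        then show ?thesis using ordZ_zero[OF Ga] by metis
      next
        assume "\<exists>S. g = tp n t S \<and> S 0 \<in> Z \<and> (\<forall>l. gop t (S l)) \<and> (\<forall>l. 1 \<le> l \<longrightarrow> ordZ Z (c * l) (S l))"
        then obtain S where S: "g = tp n t S" "S 0 \<in> Z" "\<forall>l. gop t (S l)" "\<forall>l. 1 \<le> l \<longrightarrow> ordZ Z (c * l) (S l)"
          by blast
        have eq: "ad g (\<lambda>x. t ^ k * u x) = (\<lambda>x. \<Sum>l\<le>n. t ^ (k + l) * ad (S l) u x)"
          using ad_tp_tk[OF S(3) Suc.prems(1)] S(1) by simp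
        have "\<forall>l\<in>{..n}. ordZ G N (\<lambda>x. t ^ (k + l) * ad (S l) u x)"
        proof
          fix l assume l: "l \<in> {..n}"
          have gl: "gop t (ad (S l) u)" using gop_ad S(3) Suc.prems(1) by blast
          show "ordZ G N (\<lambda>x. t ^ (k + l) * ad (S l) u x)"
          proof (cases "k + l \<le> n")
            case False
            then have "t ^ (k + l) = 0"
              by (metis tn le_Suc_ex not_less_eq_eq power_add mult_zero_left)
            then show ?thesis using ordZ_zero[OF Ga] by simp
          next
            case True
            show ?thesis
            proof (cases "l = 0")
              case True
              have "ordZ Z j' (ad (S 0) u)" using Suc.prems(2) jS S(2) by simp
              moreover have "j' + c * (Suc n - (k + 0)) \<le> N" using Suc.prems(3) jS by simp
              ultimately show ?thesis using Suc.IH[of "ad (S 0) u" j' "k + 0"] gl True by simp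
            next
              case False
              show ?thesis
              proof (cases "c * l")
                case 0
                then have "S l = (\<lambda>x. 0)" using S(4) False by fastforce
                then have "ad (S l) u = (\<lambda>x. 0)" using Suc.prems(1) by (simp add: ad_def gop_def addf_0)
                then show ?thesis using ordZ_zero[OF Ga] by simp
              next
                case (Suc r)
                have o1: "ordZ Z (Suc r) (S l)" using S(4) False Suc by (metis less_one not_le)
                have aS: "addf (S l)" and au: "addf u" using S(3) Suc.prems(1) by (auto simp: gop_def)
                have o2: "ordZ Z (Suc j') u" using Suc.prems(2) jS by simp
                have c1: "ordZ Z (Suc (r + j')) (S l \<circ> u)" using ordZ_comp[OF Za aS au o1 o2] .
                have c2: "ordZ Z (Suc (r + j')) (u \<circ> S l)" using ordZ_comp[OF Za au aS o2 o1] by (simp add: add.commute)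
                have "ad (S l) u = (\<lambda>x. (S l \<circ> u) x - (u \<circ> S l) x)" by (simp add: ad_def)
                then have o3: "ordZ Z (Suc (r + j')) (ad (S l) u)" using ordZ_diff[OF Za c1 c2] by simp
                have ar: "Suc n - k = l + (Suc n - (k + l))" using True by simp
                have "c * (Suc n - k) = c * l + c * (Suc n - (k + l))" unfolding ar by (simp add: distrib_left)
                then have "Suc (r + j') + c * (Suc n - (k + l)) \<le> N"
                  using Suc.prems(3) jS \<open>c * l = Suc r\<close> by simp
                then show ?thesis using Suc.IH[OF gl o3] by simp
              qed
            qed
          qed
        qed
        then show ?thesis unfolding eq by (rule ordZ_sum[OF Ga finite_atMost])
      qed
    qed
  qed
qed




locale L9 =
  fixes iA :: "'k::field \<Rightarrow> 'a::comm_ring_1"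
    and iB :: "'k \<Rightarrow> 'b::ring_1"
    and t :: 'b
    and n :: nat
    and phi :: "nat \<Rightarrow> 'b \<Rightarrow> 'a"
    and s :: "('a \<Rightarrow> 'a) \<Rightarrow> ('b \<Rightarrow> 'b)"
  assumes A_alg: "ring_hom_fun iA"
    and A_fg: "fin_gen_alg iA"
    and B_alg: "ring_hom_fun iB"
    and iB_central: "\<forall>c b. iB c * b = b * iB c"
    and t_central: "\<forall>b. t * b = b * t"
    and t_nilp: "t ^ Suc n = 0"
    and grB: "gr_iso iA iB t n phi"
    and deform: "induces_deformation iA iB t n phi"
    and s_into: "\<forall>d\<in>D_A iA. s d \<in> D_B iB t"
    and s_add: "\<forall>d\<in>D_A iA. \<forall>e\<in>D_A iA. s (\<lambda>x. d x + e x) = (\<lambda>x. s d x + s e x)"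
    and s_mult: "\<forall>d\<in>D_A iA. \<forall>e\<in>D_A iA. s (d \<circ> e) = s d \<circ> s e"
    and s_one: "s id = id"
    and s_scal: "\<forall>c. \<forall>d\<in>D_A iA. s (\<lambda>x. iA c * d x) = (\<lambda>x. iB c * s d x)"
    and s_section: "\<forall>d\<in>D_A iA. residue phi (s d) = d"
begin

definition "EB = End_B iB t"
definition "Y = (\<lambda>f x. f * x) ` (UNIV :: 'b set)"
definition "X = act_tens t n s ` tens n"
definition "LAs = (\<lambda>f x. f * x) ` (UNIV :: 'a set)"
definition "EA = klin_end UNIV (\<lambda>c x. iA c * x)"

definition klB :: "('b \<Rightarrow> 'b) \<Rightarrow> bool" where
  "klB d \<longleftrightarrow> (\<forall>c x. d (iB c * x) = iB c * d x)"

lemma EB_iff: "d \<in> EB \<longleftrightarrow> gop t d \<and> klB d"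
  unfolding EB_def End_B_def kn_end_def klin_end_def gop_def tlin_def klB_def addf_def by auto

lemma DB_char: "D_B iB t = {d \<in> EB. \<exists>m. ordZ Y (Suc m) d}"
  unfolding D_B_def EB_def Y_def by (rule diffops_char)

lemma RHS_char: "diffops UNIV (End_B iB t) (act_tens t n s) (tens n) = {d \<in> EB. \<exists>m. ordZ X (Suc m) d}"
  unfolding EB_def X_def by (rule diffops_char)

lemma DA_char: "D_A iA = {d \<in> EA. \<exists>m. ordZ LAs (Suc m) d}"
  unfolding D_A_def EA_def LAs_def by (rule diffops_char)

lemma tpow_central: "t ^ k * b = b * t ^ k"
proof (induction k)
  case 0 then show ?case by simp
next
  case (Suc k)
  have "t ^ Suc k * b = t * (t ^ k * b)" by (simp add: mult.assoc)
  also have "\<dots> = (t * b) * t ^ k" using Suc by (simp add: mult.assoc)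
  also have "\<dots> = b * t ^ Suc k" using t_central by (simp add: mult.assoc)
  finally show ?case .
qed

lemma tpow_big: "Suc n \<le> k \<Longrightarrow> t ^ k = 0"
  by (metis le_Suc_ex power_add t_nilp mult_zero_left)

lemma klB_ad: "klB f \<Longrightarrow> klB g \<Longrightarrow> klB (ad f g)"
  unfolding klB_def ad_def by (simp add: right_diff_distrib)
lemma klB_comp: "klB f \<Longrightarrow> klB g \<Longrightarrow> klB (f \<circ> g)"
  unfolding klB_def by simp
lemma klB_plus: "klB f \<Longrightarrow> klB g \<Longrightarrow> klB (\<lambda>x. f x + g x)"
  unfolding klB_def by (simp add: distrib_left)
lemma klB_minus: "klB f \<Longrightarrow> klB g \<Longrightarrow> klB (\<lambda>x. f x - g x)"
  unfolding klB_def by (simp add: right_diff_distrib)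
lemma klB_lmul: "klB f \<Longrightarrow> klB (\<lambda>x. c * f x)"
proof -
  assume f: "klB f"
  have "c * (iB c' * y) = iB c' * (c * y)" for c' y
    by (metis iB_central mult.assoc)
  then show ?thesis using f unfolding klB_def by simp
qed

lemma EB_ad: "f \<in> EB \<Longrightarrow> g \<in> EB \<Longrightarrow> ad f g \<in> EB"
  by (simp add: EB_iff gop_ad klB_ad)
lemma EB_comp: "f \<in> EB \<Longrightarrow> g \<in> EB \<Longrightarrow> f \<circ> g \<in> EB"
  by (simp add: EB_iff gop_comp klB_comp)
lemma EB_comp': "f \<in> EB \<Longrightarrow> g \<in> EB \<Longrightarrow> (\<lambda>x. f (g x)) \<in> EB"
  using EB_comp by (simp add: comp_def)
lemma EB_plus: "f \<in> EB \<Longrightarrow> g \<in> EB \<Longrightarrow> (\<lambda>x. f x + g x) \<in> EB"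
  by (simp add: EB_iff gop_plus klB_plus)
lemma EB_minus: "f \<in> EB \<Longrightarrow> g \<in> EB \<Longrightarrow> (\<lambda>x. f x - g x) \<in> EB"
  by (simp add: EB_iff gop_minus klB_minus)
lemma EB_zero: "(\<lambda>x. 0) \<in> EB"
  by (simp add: EB_iff gop_zero klB_def)
lemma EB_tpow: "f \<in> EB \<Longrightarrow> (\<lambda>x. t ^ k * f x) \<in> EB"
  by (simp add: EB_iff gop_tpow klB_lmul)
lemma EB_sum: "finite I \<Longrightarrow> (\<forall>i\<in>I. F i \<in> EB) \<Longrightarrow> (\<lambda>x. \<Sum>i\<in>I. F i x) \<in> EB"
proof (induction I rule: finite_induct)
  case empty then show ?case using EB_zero by simp
next
  case (insert i I) then show ?case using EB_plus[of "F i" "\<lambda>x. \<Sum>i\<in>I. F i x"] by simp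
qed
lemma EB_L: "(\<lambda>x. b * x) \<in> EB"
proof -
  have "b * (t * x) = t * (b * x)" for x by (metis t_central mult.assoc)
  then have "gop t (\<lambda>x. b * x)"
    unfolding gop_def addf_def tlin_def by (simp add: distrib_left)
  moreover have "b * (iB c * x) = iB c * (b * x)" for c x by (metis iB_central mult.assoc)
  then have "klB (\<lambda>x. b * x)"
    unfolding klB_def by simp
  ultimately show ?thesis by (simp add: EB_iff)
qed
lemma EB_id: "id \<in> EB"
  using EB_L[of 1] by (simp add: id_def)

lemma Y_EB: "Y \<subseteq> EB"
  unfolding Y_def using EB_L by auto
lemma Y_gop: "\<forall>z\<in>Y. gop t z"
  using Y_EB EB_iff by auto
lemma Y_addf: "\<forall>z\<in>Y. addf z"
  using Y_gop gop_def by auto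

lemma tpow0: "tpow_set t 0 = UNIV"
  unfolding tpow_set_def by auto

lemma tpow_mem: "x \<in> tpow_set t j \<longleftrightarrow> (\<exists>b. x = t ^ j * b)"
  unfolding tpow_set_def by auto

lemma phi_facts:
  assumes "j \<le> n"
  shows "\<forall>x\<in>tpow_set t j. \<forall>y\<in>tpow_set t j. phi j (x + y) = phi j x + phi j y"
    and "\<forall>c. \<forall>x\<in>tpow_set t j. phi j (iB c * x) = iA c * phi j x"
    and "phi j ` tpow_set t j = UNIV"
    and "{x \<in> tpow_set t j. phi j x = 0} = tpow_set t (Suc j)"
  using grB assms unfolding gr_iso_def by auto

lemma phi0_add: "phi 0 (x + y) = phi 0 x + phi 0 y"
  using phi_facts(1)[of 0] tpow0 by auto

lemma phi0_sc: "phi 0 (iB c * x) = iA c * phi 0 x"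
  using phi_facts(2)[of 0] tpow0 by auto

lemma phi0_mult: "phi 0 (x * y) = phi 0 x * phi 0 y"
proof -
  have "\<forall>i j. i + j \<le> n \<longrightarrow> (\<forall>x\<in>tpow_set t i. \<forall>y\<in>tpow_set t j.
                               phi (i + j) (x * y) = phi i x * phi j y)"
    using grB unfolding gr_iso_def by blast
  from this[rule_format, of 0 0 x y] show ?thesis using tpow0 by simp
qed

lemma phi0_one: "phi 0 1 = 1"
  using grB unfolding gr_iso_def by auto

lemma phi0_surj: "\<exists>b. phi 0 b = a"
  using phi_facts(3)[of 0] tpow0 by (metis UNIV_I image_iff le0)

lemma phi0_ker: "phi 0 x = 0 \<longleftrightarrow> (\<exists>b. x = t * b)"
  using phi_facts(4)[of 0] tpow0 unfolding tpow_set_def by (auto simp: set_eq_iff)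

lemma phi0_diff: "phi 0 (x - y) = phi 0 x - phi 0 y"
  using phi0_add[of "x - y" y] by (simp add: eq_diff_eq)

lemma phi0_zero: "phi 0 0 = 0"
  using phi0_diff[of 0 0] by simp

lemma phi0_sum: "phi 0 (\<Sum>i\<in>I. f i) = (\<Sum>i\<in>I. phi 0 (f i))"
  by (induction I rule: infinite_finite_induct) (auto simp: phi0_zero phi0_add)

lemma phi0_t: "phi 0 (t * x) = 0"
  using phi0_ker by auto

lemma phi0_iB: "phi 0 (iB c) = iA c"
  using phi0_sc[of c 1] phi0_one by simp

lemma comm_tB: "\<exists>w. b * c - c * b = t * w"
proof -
  have "phi 0 (b * c - c * b) = 0"
    unfolding phi0_diff phi0_mult by (simp add: mult.commute)
  then show ?thesis using phi0_ker by blast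
qed

lemma phim_zero: "m \<le> n \<Longrightarrow> phi m 0 = 0"
proof -
  assume m: "m \<le> n"
  have "0 = t ^ m * 0" by simp
  then have z: "0 \<in> tpow_set t m" unfolding tpow_set_def by blast
  then have "phi m (0 + 0) = phi m 0 + phi m 0" using phi_facts(1)[OF m] by blast
  then show ?thesis by simp
qed

lemma L_ord: "(\<exists>c'. c = t ^ j * c') \<Longrightarrow> Suc n \<le> N + j \<Longrightarrow> ordZ Y N (\<lambda>x. c * x)"
proof (induction N arbitrary: j c)
  case 0
  then obtain c' where "c = t ^ j * c'" by auto
  moreover have "t ^ j = 0" using 0 tpow_big by simp
  ultimately show ?case by simp
next
  case (Suc N)
  show ?case
  proof (rule ordZ_SucI)
    fix z assume "z \<in> Y"
    then obtain b where z: "z = (\<lambda>x. b * x)" unfolding Y_def by auto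
    obtain c' where c: "c = t ^ j * c'" using Suc.prems by auto
    obtain w where w: "b * c' - c' * b = t * w" using comm_tB by blast
    have "b * c - c * b = t ^ Suc j * w"
    proof -
      have "b * (t ^ j * c') = t ^ j * (b * c')" by (metis mult.assoc tpow_central)
      then have "b * c - c * b = t ^ j * (b * c' - c' * b)"
        unfolding c by (simp add: right_diff_distrib mult.assoc)
      then show ?thesis using w by (metis mult.assoc power_Suc2)
    qed
    then have "ad z (\<lambda>x. c * x) = (\<lambda>x. (t ^ Suc j * w) * x)"
      unfolding z ad_def by (auto simp: mult.assoc[symmetric] left_diff_distrib[symmetric])
    moreover have "ordZ Y N (\<lambda>x. (t ^ Suc j * w) * x)"
    proof (rule Suc.IH[where j="Suc j"])
      show "\<exists>c'. t ^ Suc j * w = t ^ Suc j * c'" by blast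
      show "Suc n \<le> N + Suc j" using Suc.prems by simp
    qed
    ultimately show "ordZ Y N (ad z (\<lambda>x. c * x))" by simp
  qed
qed

lemma L_DB: "(\<lambda>x. b * x) \<in> D_B iB t"
  using L_ord[of b 0 "Suc n"] EB_L unfolding DB_char by auto

lemma L_ordn: "ordZ Y (Suc n) (\<lambda>x. b * x)"
  using L_ord[of b 0 "Suc n"] by auto

end



context L9
begin

definition klA :: "('a \<Rightarrow> 'a) \<Rightarrow> bool" where
  "klA d \<longleftrightarrow> (\<forall>c x. d (iA c * x) = iA c * d x)"

lemma EA_iff: "d \<in> EA \<longleftrightarrow> addf d \<and> klA d"
  unfolding EA_def klin_end_def klA_def addf_def by auto

lemma EA_ad: "f \<in> EA \<Longrightarrow> g \<in> EA \<Longrightarrow> ad f g \<in> EA"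
proof -
  assume a: "f \<in> EA" "g \<in> EA"
  then have "addf (ad f g)" using addf_ad EA_iff by blast
  moreover have "klA (ad f g)" using a unfolding EA_iff klA_def ad_def by (simp add: right_diff_distrib)
  ultimately show ?thesis by (simp add: EA_iff)
qed
lemma EA_comp: "f \<in> EA \<Longrightarrow> g \<in> EA \<Longrightarrow> f \<circ> g \<in> EA"
  by (auto simp: EA_iff addf_comp klA_def)
lemma EA_plus: "f \<in> EA \<Longrightarrow> g \<in> EA \<Longrightarrow> (\<lambda>x. f x + g x) \<in> EA"
  by (auto simp: EA_iff addf_plus klA_def distrib_left)
lemma EA_minus: "f \<in> EA \<Longrightarrow> g \<in> EA \<Longrightarrow> (\<lambda>x. f x - g x) \<in> EA"
  by (auto simp: EA_iff addf_minus klA_def right_diff_distrib)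
lemma EA_zero: "(\<lambda>x. 0) \<in> EA"
  by (auto simp: EA_iff addf_def klA_def)
lemma EA_L: "(\<lambda>x. a * x) \<in> EA"
  by (auto simp: EA_iff addf_def klA_def distrib_left mult.left_commute)
lemma EA_id: "id \<in> EA"
  using EA_L[of 1] by (simp add: id_def)

lemma LAs_EA: "LAs \<subseteq> EA"
  unfolding LAs_def using EA_L by auto
lemma LAs_addf: "\<forall>z\<in>LAs. addf z"
  using LAs_EA EA_iff by auto

lemma DA_iff: "D \<in> D_A iA \<longleftrightarrow> D \<in> EA \<and> (\<exists>m. ordZ LAs (Suc m) D)"
  unfolding DA_char by auto

lemma DA_EA: "D \<in> D_A iA \<Longrightarrow> D \<in> EA"
  by (simp add: DA_iff)

lemma DA_addf: "D \<in> D_A iA \<Longrightarrow> addf D"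
  using DA_EA EA_iff by blast

lemma DA_ordI: "D \<in> EA \<Longrightarrow> ordZ LAs m D \<Longrightarrow> D \<in> D_A iA"
  unfolding DA_iff using ordZ_mono[OF LAs_addf, of m D "Suc m"] by auto

lemma DA_get: "D \<in> D_A iA \<Longrightarrow> \<exists>m. ordZ LAs m D"
  by (metis DA_iff)

lemma DA_plus: "D \<in> D_A iA \<Longrightarrow> D' \<in> D_A iA \<Longrightarrow> (\<lambda>x. D x + D' x) \<in> D_A iA"
proof -
  assume a: "D \<in> D_A iA" "D' \<in> D_A iA"
  then obtain m m' where "ordZ LAs m D" "ordZ LAs m' D'" using DA_get by blast
  then have "ordZ LAs (max m m') D" "ordZ LAs (max m m') D'" using ordZ_mono[OF LAs_addf] by auto
  then have "ordZ LAs (max m m') (\<lambda>x. D x + D' x)" by (rule ordZ_add[OF LAs_addf])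
  then show ?thesis using DA_ordI[OF EA_plus[OF DA_EA[OF a(1)] DA_EA[OF a(2)]]] by blast
qed

lemma DA_minus: "D \<in> D_A iA \<Longrightarrow> D' \<in> D_A iA \<Longrightarrow> (\<lambda>x. D x - D' x) \<in> D_A iA"
proof -
  assume a: "D \<in> D_A iA" "D' \<in> D_A iA"
  then obtain m m' where "ordZ LAs m D" "ordZ LAs m' D'" using DA_get by blast
  then have "ordZ LAs (max m m') D" "ordZ LAs (max m m') D'" using ordZ_mono[OF LAs_addf] by auto
  then have "ordZ LAs (max m m') (\<lambda>x. D x - D' x)" by (rule ordZ_diff[OF LAs_addf])
  then show ?thesis using DA_ordI[OF EA_minus[OF DA_EA[OF a(1)] DA_EA[OF a(2)]]] by blast
qed

lemma DA_zero: "(\<lambda>x. 0) \<in> D_A iA"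
  using DA_ordI[OF EA_zero, of 0] by simp

lemma DA_neg: "D \<in> D_A iA \<Longrightarrow> (\<lambda>x. - D x) \<in> D_A iA"
  using DA_minus[OF DA_zero] by simp

lemma DA_sum: "finite I \<Longrightarrow> (\<forall>i\<in>I. F i \<in> D_A iA) \<Longrightarrow> (\<lambda>x. \<Sum>i\<in>I. F i x) \<in> D_A iA"
proof (induction I rule: finite_induct)
  case empty then show ?case using DA_zero by simp
next
  case (insert i I) then show ?case using DA_plus[of "F i" "\<lambda>x. \<Sum>i\<in>I. F i x"] by simp
qed

lemma ordZ_comp_A:
  assumes "D \<in> EA" "D' \<in> EA" "ordZ LAs (Suc m) D" "ordZ LAs (Suc m') D'"
  shows "ordZ LAs (Suc (m + m')) (D \<circ> D')"
  using ordZ_comp[OF LAs_addf _ _ assms(3,4)] assms(1,2) unfolding EA_iff by blast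

lemma DA_comp: "D \<in> D_A iA \<Longrightarrow> D' \<in> D_A iA \<Longrightarrow> D \<circ> D' \<in> D_A iA"
proof -
  assume a: "D \<in> D_A iA" "D' \<in> D_A iA"
  then obtain m m' where "ordZ LAs (Suc m) D" "ordZ LAs (Suc m') D'" unfolding DA_iff by blast
  then have "ordZ LAs (Suc (m + m')) (D \<circ> D')" using ordZ_comp_A DA_EA a by blast
  then show ?thesis using DA_ordI[OF EA_comp[OF DA_EA[OF a(1)] DA_EA[OF a(2)]]] by blast
qed

lemma L_ordA: "ordZ LAs (Suc 0) (\<lambda>x. a * x)"
proof (rule ordZ_SucI)
  fix z assume "z \<in> LAs"
  then obtain b where "z = (\<lambda>x. b * x)" unfolding LAs_def by auto
  then show "ordZ LAs 0 (ad z (\<lambda>x. a * x))" by (simp add: ad_def mult.left_commute)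
qed

lemma DA_L: "(\<lambda>x. a * x) \<in> D_A iA"
  using DA_ordI[OF EA_L L_ordA] .

lemma DA_id: "id \<in> D_A iA"
  using DA_L[of 1] by (simp add: id_def)

lemma id_ordA: "ordZ LAs (Suc 0) id"
  using L_ordA[of 1] by (simp add: id_def)

lemma DA_adL: "D \<in> D_A iA \<Longrightarrow> ad (\<lambda>x. a * x) D \<in> D_A iA"
proof -
  assume D: "D \<in> D_A iA"
  have eq: "ad (\<lambda>x. a * x) D = (\<lambda>x. ((\<lambda>x. a * x) \<circ> D) x - (D \<circ> (\<lambda>x. a * x)) x)"
    by (simp add: ad_def)
  show ?thesis by (subst eq) (rule DA_minus[OF DA_comp[OF DA_L D] DA_comp[OF D DA_L]])
qed

lemma s_zero: "s (\<lambda>x. 0) = (\<lambda>x. 0)"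
proof -
  have "s (\<lambda>x. 0 + 0) = (\<lambda>x. s (\<lambda>x. 0) x + s (\<lambda>x. 0) x)" using s_add[rule_format, OF DA_zero DA_zero] .
  then have "s (\<lambda>x. 0) = (\<lambda>x. s (\<lambda>x. 0) x + s (\<lambda>x. 0) x)" by simp
  then show ?thesis by (metis (no_types, lifting) add_cancel_right_right)
qed

lemma s_minus: "D \<in> D_A iA \<Longrightarrow> D' \<in> D_A iA \<Longrightarrow> s (\<lambda>x. D x - D' x) = (\<lambda>x. s D x - s D' x)"
proof -
  assume a: "D \<in> D_A iA" "D' \<in> D_A iA"
  have "s (\<lambda>x. (\<lambda>x. D x - D' x) x + D' x) = (\<lambda>x. s (\<lambda>x. D x - D' x) x + s D' x)"
    by (rule s_add[rule_format, OF DA_minus[OF a] a(2)])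
  then have "s D = (\<lambda>x. s (\<lambda>x. D x - D' x) x + s D' x)" by simp
  then show ?thesis by (simp add: fun_eq_iff eq_diff_eq)
qed

lemma s_plus: "D \<in> D_A iA \<Longrightarrow> D' \<in> D_A iA \<Longrightarrow> s (\<lambda>x. D x + D' x) = (\<lambda>x. s D x + s D' x)"
  by (rule s_add[rule_format])

lemma s_sum: "finite I \<Longrightarrow> (\<forall>i\<in>I. F i \<in> D_A iA) \<Longrightarrow> s (\<lambda>x. \<Sum>i\<in>I. F i x) = (\<lambda>x. \<Sum>i\<in>I. s (F i) x)"
proof (induction I rule: finite_induct)
  case empty then show ?case using s_zero by simp
next
  case (insert i I)
  have "s (\<lambda>x. \<Sum>i\<in>insert i I. F i x) = s (\<lambda>x. F i x + (\<lambda>x. \<Sum>i\<in>I. F i x) x)"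
    using insert by simp
  also have "\<dots> = (\<lambda>x. s (F i) x + s (\<lambda>x. \<Sum>i\<in>I. F i x) x)"
  proof (rule s_plus)
    show "F i \<in> D_A iA" using insert.prems by simp
    show "(\<lambda>x. \<Sum>i\<in>I. F i x) \<in> D_A iA" using DA_sum[of I F] insert by simp
  qed
  finally show ?case using insert by simp
qed

lemma s_comp: "D \<in> D_A iA \<Longrightarrow> D' \<in> D_A iA \<Longrightarrow> s (D \<circ> D') = s D \<circ> s D'"
  by (rule s_mult[rule_format])

lemma s_EB: "D \<in> D_A iA \<Longrightarrow> s D \<in> EB"
proof -
  assume "D \<in> D_A iA"
  then have "s D \<in> D_B iB t" using s_into by blast
  then show ?thesis unfolding DB_char by blast
qed

lemma s_DB: "D \<in> D_A iA \<Longrightarrow> s D \<in> D_B iB t"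
  using s_into by blast

lemma s_LiA: "s (\<lambda>x. iA c * x) = (\<lambda>x. iB c * x)"
proof -
  have "s (\<lambda>x. iA c * id x) = (\<lambda>x. iB c * s id x)" by (rule s_scal[rule_format, OF DA_id])
  then show ?thesis using s_one by (simp add: id_def)
qed

lemma s_Lmult: "s (\<lambda>x. (a * a') * x) = s (\<lambda>x. a * x) \<circ> s (\<lambda>x. a' * x)"
proof -
  have eq: "(\<lambda>x. (a * a') * x) = (\<lambda>x. a * x) \<circ> (\<lambda>x. a' * x)" by (auto simp: mult.assoc)
  show ?thesis by (subst eq) (rule s_comp[OF DA_L DA_L])
qed

lemma s_Ladd: "s (\<lambda>x. (a + a') * x) = (\<lambda>x. s (\<lambda>x. a * x) x + s (\<lambda>x. a' * x) x)"
proof -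
  have eq: "(\<lambda>x. (a + a') * x) = (\<lambda>x. a * x + a' * x)" by (auto simp: distrib_right)
  show ?thesis by (subst eq) (rule s_plus[OF DA_L DA_L])
qed

lemma s_L0: "s (\<lambda>x. 0 * x) = (\<lambda>x. 0)"
  using s_zero by simp

end


context L9
begin

lemma act_EB: "act_tens t n s f \<in> EB"
  unfolding act_tens_def by (rule EB_sum) (auto intro: EB_tpow s_EB DA_L)

lemma X_EB: "X \<subseteq> EB"
  unfolding X_def using act_EB by auto

lemma X_gop: "\<forall>z\<in>X. gop t z"
  using X_EB EB_iff by auto

lemma X_addf: "\<forall>z\<in>X. addf z"
  using X_gop gop_def by auto

lemma act_single: "act_tens t n s (\<lambda>j. if j = 0 then a else 0) = s (\<lambda>x. a * x)"
proof -
  have "act_tens t n s (\<lambda>j. if j = 0 then a else 0) = (\<lambda>b. \<Sum>j\<le>n. (if j = 0 then s (\<lambda>x. a * x) b else 0))"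
    unfolding act_tens_def by (intro ext sum.cong refl) (auto simp: s_L0)
  then show ?thesis by (simp add: sum.delta)
qed

lemma sL_X: "s (\<lambda>x. a * x) \<in> X"
proof -
  have "(\<lambda>j. if j = 0 then a else 0) \<in> tens n" unfolding tens_def by auto
  then show ?thesis using act_single unfolding X_def by (metis image_eqI)
qed

lemma s_ad: "D \<in> D_A iA \<Longrightarrow> ad (s (\<lambda>x. a * x)) (s D) = s (ad (\<lambda>x. a * x) D)"
proof -
  assume D: "D \<in> D_A iA"
  have eq: "ad (\<lambda>x. a * x) D = (\<lambda>x. ((\<lambda>x. a * x) \<circ> D) x - (D \<circ> (\<lambda>x. a * x)) x)"
    by (simp add: ad_def)
  have "s (ad (\<lambda>x. a * x) D) = (\<lambda>x. s ((\<lambda>x. a * x) \<circ> D) x - s (D \<circ> (\<lambda>x. a * x)) x)"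
    by (subst eq) (rule s_minus[OF DA_comp[OF DA_L D] DA_comp[OF D DA_L]])
  also have "\<dots> = (\<lambda>x. (s (\<lambda>x. a * x) \<circ> s D) x - (s D \<circ> s (\<lambda>x. a * x)) x)"
    unfolding s_comp[OF DA_L D] s_comp[OF D DA_L] ..
  also have "\<dots> = ad (s (\<lambda>x. a * x)) (s D)"
    by (simp add: ad_def)
  finally show ?thesis by simp
qed

lemma s_ordX: "D \<in> D_A iA \<Longrightarrow> ordZ LAs m D \<Longrightarrow> ordZ X m (s D)"
proof (induction m arbitrary: D)
  case 0
  then show ?case using s_zero by simp
next
  case (Suc m)
  show ?case
  proof (rule ordZ_SucI)
    fix z assume "z \<in> X"
    then obtain f where z: "z = act_tens t n s f" unfolding X_def by auto
    have sD: "gop t (s D)" using s_EB[OF Suc.prems(1)] EB_iff by auto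
    have eq: "ad z (s D) = (\<lambda>x. \<Sum>j\<le>n. t ^ j * s (ad (\<lambda>x. f j * x) D) x)"
    proof
      fix x
      have "ad z (s D) x = (\<Sum>j\<le>n. t ^ j * s (\<lambda>y. f j * y) (s D x)) - s D (\<Sum>j\<le>n. t ^ j * s (\<lambda>y. f j * y) x)"
        unfolding z ad_def act_tens_def by simp
      also have "\<dots> = (\<Sum>j\<le>n. t ^ j * s (\<lambda>y. f j * y) (s D x)) - (\<Sum>j\<le>n. t ^ j * s D (s (\<lambda>y. f j * y) x))"
        using sD by (simp add: gop_def addf_sum tlin_pow)
      also have "\<dots> = (\<Sum>j\<le>n. t ^ j * ad (s (\<lambda>y. f j * y)) (s D) x)"
        by (simp add: ad_def sum_subtractf right_diff_distrib)
      also have "\<dots> = (\<Sum>j\<le>n. t ^ j * s (ad (\<lambda>x. f j * x) D) x)"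
        using s_ad[OF Suc.prems(1)] by simp
      finally show "ad z (s D) x = (\<Sum>j\<le>n. t ^ j * s (ad (\<lambda>x. f j * x) D) x)" .
    qed
    have "\<forall>j\<in>{..n}. ordZ X m (\<lambda>x. t ^ j * s (ad (\<lambda>x. f j * x) D) x)"
    proof
      fix j
      have "ad (\<lambda>x. f j * x) D \<in> D_A iA" using DA_adL[OF Suc.prems(1)] .
      moreover have "ordZ LAs m (ad (\<lambda>x. f j * x) D)" using Suc.prems(2) unfolding LAs_def by auto
      ultimately have "ordZ X m (s (ad (\<lambda>x. f j * x) D))" using Suc.IH by blast
      then show "ordZ X m (\<lambda>x. t ^ j * s (ad (\<lambda>x. f j * x) D) x)"
        using ordZ_tpow[OF X_gop] by blast
    qed
    then show "ordZ X m (ad z (s D))" unfolding eq by (rule ordZ_sum[OF X_addf finite_atMost])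
  qed
qed

end



context L9
begin

lemma tpow_suc_mult: "t ^ m * (t * y) = t ^ Suc m * y"
  by (metis mult.assoc power_Suc2)

lemma DB_iff: "e \<in> D_B iB t \<longleftrightarrow> e \<in> EB \<and> (\<exists>m. ordZ Y (Suc m) e)"
  unfolding DB_char by auto

lemma DB_EB: "e \<in> D_B iB t \<Longrightarrow> e \<in> EB"
  by (simp add: DB_iff)

lemma DB_ordI: "e \<in> EB \<Longrightarrow> ordZ Y m e \<Longrightarrow> e \<in> D_B iB t"
  unfolding DB_iff using ordZ_mono[OF Y_addf, of m e "Suc m"] by auto

lemma DB_get: "e \<in> D_B iB t \<Longrightarrow> \<exists>m. ordZ Y m e"
  by (metis DB_iff)

lemma DB_minus: "e \<in> D_B iB t \<Longrightarrow> e' \<in> D_B iB t \<Longrightarrow> (\<lambda>x. e x - e' x) \<in> D_B iB t"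
proof -
  assume a: "e \<in> D_B iB t" "e' \<in> D_B iB t"
  then obtain m m' where "ordZ Y m e" "ordZ Y m' e'" using DB_get by blast
  then have "ordZ Y (max m m') e" "ordZ Y (max m m') e'" using ordZ_mono[OF Y_addf] by auto
  then have "ordZ Y (max m m') (\<lambda>x. e x - e' x)" by (rule ordZ_diff[OF Y_addf])
  then show ?thesis using DB_ordI[OF EB_minus[OF DB_EB[OF a(1)] DB_EB[OF a(2)]]] by blast
qed

lemma DB_zero: "(\<lambda>x. 0) \<in> D_B iB t"
  using DB_ordI[OF EB_zero, of 0] by simp

lemma sig: "phi 0 (SOME b. phi 0 b = a) = a"
  using someI_ex[OF phi0_surj] .

lemma EB_phi0_cong:
  assumes e: "e \<in> EB" and xy: "phi 0 x = phi 0 y"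
  shows "phi 0 (e x) = phi 0 (e y)"
proof -
  have "phi 0 (x - y) = 0" using xy phi0_diff by simp
  then obtain w where w: "x - y = t * w" using phi0_ker by blast
  have ge: "gop t e" using e EB_iff by blast
  have "e x - e y = e (x - y)" using ge by (simp add: gop_def addf_diff)
  also have "\<dots> = t * e w" using ge w by (simp add: gop_def tlin_def)
  finally have "phi 0 (e x - e y) = 0" using phi0_t by simp
  then show ?thesis using phi0_diff by simp
qed

lemma res_phi0: "e \<in> EB \<Longrightarrow> residue phi e (phi 0 x) = phi 0 (e x)"
  unfolding residue_def using EB_phi0_cong sig by blast

lemma all_phi0: "(\<And>x. P (phi 0 x)) \<Longrightarrow> P a"
  using phi0_surj by metis

lemma res_EA: "e \<in> EB \<Longrightarrow> residue phi e \<in> EA"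
proof -
  assume e: "e \<in> EB"
  have ge: "gop t e" "klB e" using e EB_iff by auto
  have "residue phi e (a + a') = residue phi e a + residue phi e a'" for a a'
  proof -
    obtain x y where xy: "phi 0 x = a" "phi 0 y = a'" using phi0_surj by metis
    have "residue phi e (a + a') = residue phi e (phi 0 (x + y))" using xy by (simp add: phi0_add)
    also have "\<dots> = phi 0 (e (x + y))" using res_phi0[OF e] .
    also have "\<dots> = phi 0 (e x) + phi 0 (e y)" using ge by (simp add: gop_def addf_def phi0_add)
    finally show ?thesis using res_phi0[OF e, of x] res_phi0[OF e, of y] xy by simp
  qed
  moreover have "residue phi e (iA c * a) = iA c * residue phi e a" for c a
  proof -
    obtain x where x: "phi 0 x = a" using phi0_surj by metis
    have "residue phi e (iA c * a) = residue phi e (phi 0 (iB c * x))" using x by (simp add: phi0_sc)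
    also have "\<dots> = phi 0 (e (iB c * x))" using res_phi0[OF e] .
    also have "\<dots> = iA c * phi 0 (e x)" using ge by (simp add: klB_def phi0_sc)
    finally show ?thesis using res_phi0[OF e, of x] x by simp
  qed
  ultimately show ?thesis unfolding EA_iff addf_def klA_def by blast
qed

lemma res_ord: "e \<in> EB \<Longrightarrow> ordZ Y m e \<Longrightarrow> ordZ LAs m (residue phi e)"
proof (induction m arbitrary: e)
  case 0
  then show ?case by (simp add: residue_def phi0_zero)
next
  case (Suc m)
  show ?case
  proof (rule ordZ_SucI)
    fix z assume "z \<in> LAs"
    then obtain a where z: "z = (\<lambda>x. a * x)" unfolding LAs_def by auto
    obtain b where b: "phi 0 b = a" using phi0_surj by blast
    have e2: "ad (\<lambda>x. b * x) e \<in> EB" using EB_ad[OF EB_L Suc.prems(1)] .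
    have "ad z (residue phi e) = residue phi (ad (\<lambda>x. b * x) e)"
    proof
      fix a'
      show "ad z (residue phi e) a' = residue phi (ad (\<lambda>x. b * x) e) a'"
      proof (rule all_phi0[of "\<lambda>a'. ad z (residue phi e) a' = residue phi (ad (\<lambda>x. b * x) e) a'"])
        fix x
        have ab: "a * phi 0 x = phi 0 (b * x)" using b phi0_mult by simp
        have "ad z (residue phi e) (phi 0 x) = a * residue phi e (phi 0 x) - residue phi e (phi 0 (b * x))"
          unfolding z ad_def by (simp add: ab)
        also have "\<dots> = a * phi 0 (e x) - residue phi e (phi 0 (b * x))"
          using res_phi0[OF Suc.prems(1)] by simp
        also have "\<dots> = phi 0 (b * e x - e (b * x))"
        proof -
          have "phi 0 (b * e x - e (b * x)) = phi 0 b * phi 0 (e x) - phi 0 (e (b * x))"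
            by (simp only: phi0_diff phi0_mult)
          then show ?thesis using res_phi0[OF Suc.prems(1), of "b * x"] b by simp
        qed
        also have "\<dots> = residue phi (ad (\<lambda>x. b * x) e) (phi 0 x)"
          using res_phi0[OF e2] by (simp add: ad_def)
        finally show "ad z (residue phi e) (phi 0 x) = residue phi (ad (\<lambda>x. b * x) e) (phi 0 x)" .
      qed
    qed
    moreover have "ordZ LAs m (residue phi (ad (\<lambda>x. b * x) e))"
      using Suc.IH[OF e2] Suc.prems(2) unfolding Y_def by auto
    ultimately show "ordZ LAs m (ad z (residue phi e))" by simp
  qed
qed

lemma res_DA: "e \<in> D_B iB t \<Longrightarrow> residue phi e \<in> D_A iA"
proof -
  assume e: "e \<in> D_B iB t"
  then obtain m where "ordZ Y m e" using DB_get by blast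
  then have "ordZ LAs m (residue phi e)" using res_ord DB_EB e by blast
  then show ?thesis using DA_ordI res_EA DB_EB e by blast
qed

lemma res_minus: "residue phi (\<lambda>x. e x - e' x) = (\<lambda>a. residue phi e a - residue phi e' a)"
  unfolding residue_def by (simp add: phi0_diff)

lemma res_L: "residue phi (\<lambda>x. b * x) = (\<lambda>a. phi 0 b * a)"
proof
  fix a show "residue phi (\<lambda>x. b * x) a = phi 0 b * a"
    unfolding residue_def by (simp add: phi0_mult sig)
qed

section \<open>kernel of residue\<close>

lemma kernel:
  assumes e: "e \<in> D_B iB t" and k: "\<forall>x. phi 0 (e x) = 0"
  shows "\<exists>e'\<in>D_B iB t. e = (\<lambda>x. t * e' x)"
proof -
  define ds where "ds = (\<lambda>i::nat. if i = 0 then e else (\<lambda>x::'b. 0::'b))"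
  have ge: "gop t e" using DB_EB[OF e] EB_iff by blast
  have h1: "\<forall>i\<le>n. ds i \<in> tD iB t i"
  proof (intro allI impI)
    fix i assume "i \<le> n"
    show "ds i \<in> tD iB t i"
    proof (cases "i = 0")
      case True
      have "ds i = (\<lambda>x. t ^ i * e x)" using True by (simp add: ds_def)
      then show ?thesis unfolding tD_def using e by blast
    next
      case False
      show ?thesis unfolding tD_def ds_def using False DB_zero by (intro CollectI exI[of _ "\<lambda>x. 0"]) simp
    qed
  qed
  have h2: "\<forall>p\<in>tens n. \<forall>m. (\<Sum>i\<le>n. gamma_phi t phi n i (ds i) p m) = 0"
  proof (intro ballI allI)
    fix p :: "nat \<Rightarrow> 'a" and m
    have "gamma_phi t phi n i (ds i) p m = 0" for i
    proof (cases "i \<le> m \<and> m \<le> n")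
      case False then show ?thesis unfolding gamma_phi_def by auto
    next
      case True
      then have mn: "m \<le> n" by simp
      show ?thesis
      proof (cases "i = 0")
        case False
        then show ?thesis unfolding gamma_phi_def ds_def using phim_zero[OF mn] by simp
      next
        case True
        define b where "b = (SOME b. b \<in> tpow_set t (m - i) \<and> phi (m - i) b = p (m - i))"
        have "p (m - i) \<in> phi (m - i) ` tpow_set t (m - i)"
          using phi_facts(3)[OF mn] True by simp
        then obtain b0 where "p (m - i) = phi (m - i) b0" "b0 \<in> tpow_set t (m - i)" by (rule imageE)
        then have ex: "\<exists>b. b \<in> tpow_set t (m - i) \<and> phi (m - i) b = p (m - i)"
          by metis
        have "b \<in> tpow_set t (m - i) \<and> phi (m - i) b = p (m - i)"
          unfolding b_def by (rule someI_ex[OF ex])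
        then have "b \<in> tpow_set t m" using True by simp
        then obtain c where c: "b = t ^ m * c" using tpow_mem by blast
        obtain w where w: "e c = t * w" using k phi0_ker by blast
        have "e b = t ^ m * e c" using c tlin_pow[of t e m c] ge by (simp add: gop_def)
        then have "e b = t ^ Suc m * w" using w tpow_suc_mult by simp
        then have "e b \<in> tpow_set t (Suc m)" using tpow_mem by blast
        then have "phi m (e b) = 0" using phi_facts(4)[OF mn] by blast
        then show ?thesis unfolding gamma_phi_def ds_def b_def using True mn by simp
      qed
    qed
    then show "(\<Sum>i\<le>n. gamma_phi t phi n i (ds i) p m) = 0" by simp
  qed
  have inj: "\<forall>ds. (\<forall>i\<le>n. ds i \<in> tD iB t i)
           \<and> (\<forall>p\<in>tens n. \<forall>m. (\<Sum>i\<le>n. gamma_phi t phi n i (ds i) p m) = 0)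
           \<longrightarrow> (\<forall>i\<le>n. ds i \<in> tD iB t (Suc i))"
    using deform unfolding induces_deformation_def by (rule conjunct1)
  have "\<forall>i\<le>n. ds i \<in> tD iB t (Suc i)"
    using inj[rule_format, OF conjI[OF h1 h2]] by blast
  then have "ds 0 \<in> tD iB t 1" by simp
  then show ?thesis unfolding ds_def tD_def by auto
qed

section \<open>expansion of differential operators\<close>

lemma expand_aux:
  assumes e: "e \<in> D_B iB t"
  shows "\<exists>D e'. (\<forall>k. D k \<in> D_A iA) \<and> e' \<in> D_B iB t \<and> e = (\<lambda>x. (\<Sum>k<m. t ^ k * s (D k) x) + t ^ m * e' x)"
proof (induction m)
  case 0
  show ?case
    by (rule exI[of _ "\<lambda>_. (\<lambda>x. 0)"], rule exI[of _ e]) (simp add: DA_zero e)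
next
  case (Suc m)
  then obtain D e' where D: "\<forall>k. D k \<in> D_A iA" "e' \<in> D_B iB t"
    "e = (\<lambda>x. (\<Sum>k<m. t ^ k * s (D k) x) + t ^ m * e' x)" by blast
  define r where "r = residue phi e'"
  have r: "r \<in> D_A iA" unfolding r_def using res_DA[OF D(2)] .
  have f: "(\<lambda>x. e' x - s r x) \<in> D_B iB t" using DB_minus[OF D(2) s_DB[OF r]] .
  have "phi 0 (e' x - s r x) = 0" for x
  proof -
    have "phi 0 (e' x - s r x) = residue phi e' (phi 0 x) - residue phi (s r) (phi 0 x)"
      using res_phi0[OF DB_EB[OF D(2)]] res_phi0[OF s_EB[OF r]] by (simp add: phi0_diff)
    also have "\<dots> = 0" using s_section r unfolding r_def by simp
    finally show ?thesis .
  qed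
  then obtain e'' where e'': "e'' \<in> D_B iB t" "(\<lambda>x. e' x - s r x) = (\<lambda>x. t * e'' x)"
    using kernel[OF f] by blast
  have e'x: "e' x = s r x + t * e'' x" for x
  proof -
    have "e' x - s r x = t * e'' x" using fun_cong[OF e''(2), of x] by simp
    then show ?thesis by (simp add: diff_eq_eq add.commute)
  qed
  define D' where "D' = D(m := r)"
  have "\<forall>k. D' k \<in> D_A iA" unfolding D'_def using D(1) r by simp
  moreover have "e = (\<lambda>x. (\<Sum>k<Suc m. t ^ k * s (D' k) x) + t ^ Suc m * e'' x)"
  proof
    fix x
    have "(\<Sum>k<Suc m. t ^ k * s (D' k) x) = (\<Sum>k<m. t ^ k * s (D k) x) + t ^ m * s r x"
      unfolding D'_def by simp
    then show "e x = (\<Sum>k<Suc m. t ^ k * s (D' k) x) + t ^ Suc m * e'' x"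
      using D(3) e'x by (simp add: distrib_left tpow_suc_mult add.assoc)
  qed
  ultimately show ?case using e'' by blast
qed

lemma expand:
  assumes e: "e \<in> D_B iB t"
  shows "\<exists>D. (\<forall>k. D k \<in> D_A iA) \<and> e = tp n t (\<lambda>k. s (D k))"
proof -
  obtain D e' where D: "\<forall>k. D k \<in> D_A iA" "e = (\<lambda>x. (\<Sum>k<Suc n. t ^ k * s (D k) x) + t ^ Suc n * e' x)"
    using expand_aux[OF e, of "Suc n"] by blast
  then have "e = tp n t (\<lambda>k. s (D k))" unfolding tp_def using t_nilp by (simp add: lessThan_Suc_atMost)
  then show ?thesis using D by blast
qed

end



lemma finite_bound:
  assumes "finite S" "\<forall>a\<in>S. \<exists>r::nat. Q a r" "\<forall>a r r'. Q a r \<longrightarrow> r \<le> r' \<longrightarrow> Q a r'"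
  shows "\<exists>c. \<forall>a\<in>S. Q a c"
  using assms(1,2)
proof (induction S rule: finite_induct)
  case empty then show ?case by simp
next
  case (insert a S)
  then obtain c where c: "\<forall>a\<in>S. Q a c" by auto
  obtain r where r: "Q a r" using insert.prems by auto
  have "\<forall>x\<in>insert a S. Q x (max c r)" using c r assms(3) by (metis insert_iff max.cobounded1 max.cobounded2)
  then show ?case by blast
qed

lemma tp01:
  fixes t :: "'b::ring_1"
  assumes "t ^ Suc n = 0"
  shows "tp n t (\<lambda>k. if k = 0 then A0 else if k = 1 then A1 else (\<lambda>x. 0)) = (\<lambda>x. A0 x + t * A1 x)"
proof
  fix x
  have "tp n t (\<lambda>k. if k = 0 then A0 else if k = 1 then A1 else (\<lambda>x. 0)) x
      = (\<Sum>k\<le>n. (if k = 0 then A0 x else 0) + (if k = 1 then t * A1 x else 0))"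
    unfolding tp_def by (intro sum.cong refl) auto
  also have "\<dots> = A0 x + (if 1 \<le> n then t * A1 x else 0)"
    by (simp add: sum.distrib sum.delta)
  also have "\<dots> = A0 x + t * A1 x"
    using assms by (cases n) auto
  finally show "tp n t (\<lambda>k. if k = 0 then A0 else if k = 1 then A1 else (\<lambda>x. 0)) x = A0 x + t * A1 x" .
qed

context L9
begin

lemma iA_zero: "iA 0 = 0" and iA_one: "iA 1 = 1" and iB_zero: "iB 0 = 0" and iB_one: "iB 1 = 1"
proof -
  show "iA 1 = 1" "iB 1 = 1" using A_alg B_alg unfolding ring_hom_fun_def by auto
  have "iA (0 + 0) = iA 0 + iA 0" using A_alg unfolding ring_hom_fun_def by blast
  then show "iA 0 = 0" by simp
  have "iB (0 + 0) = iB 0 + iB 0" using B_alg unfolding ring_hom_fun_def by blast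
  then show "iB 0 = 0" by simp
qed

lemma sL_decomp: "\<exists>b e. phi 0 b = a \<and> e \<in> D_B iB t \<and> s (\<lambda>x. a * x) = (\<lambda>x. b * x + t * e x)"
proof -
  obtain b where b: "phi 0 b = a" using phi0_surj by blast
  have f: "(\<lambda>x. s (\<lambda>x. a * x) x - b * x) \<in> D_B iB t" using DB_minus[OF s_DB[OF DA_L] L_DB] .
  have "phi 0 (s (\<lambda>x. a * x) x - b * x) = 0" for x
  proof -
    have "phi 0 (s (\<lambda>x. a * x) x - b * x) = residue phi (s (\<lambda>x. a * x)) (phi 0 x) - phi 0 b * phi 0 x"
      using res_phi0[OF s_EB[OF DA_L]] by (simp add: phi0_diff phi0_mult)
    also have "\<dots> = 0" using s_section DA_L b by simp
    finally show ?thesis .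
  qed
  then obtain e where e: "e \<in> D_B iB t" "(\<lambda>x. s (\<lambda>x. a * x) x - b * x) = (\<lambda>x. t * e x)"
    using kernel[OF f] by blast
  have "s (\<lambda>x. a * x) = (\<lambda>x. b * x + t * e x)"
  proof
    fix x
    have "s (\<lambda>x. a * x) x - b * x = t * e x" using fun_cong[OF e(2), of x] by simp
    then show "s (\<lambda>x. a * x) x = b * x + t * e x" by (simp add: diff_eq_eq add.commute)
  qed
  then show ?thesis using e(1) b by blast
qed

definition Qs :: "'a \<Rightarrow> nat \<Rightarrow> bool" where
  "Qs a r \<longleftrightarrow> (\<exists>b e. e \<in> EB \<and> ordZ Y r e \<and> s (\<lambda>x. a * x) = (\<lambda>x. b * x + t * e x))"

lemma Qs_ex: "\<exists>r. Qs a r"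
proof -
  obtain b e where be: "e \<in> D_B iB t" "s (\<lambda>x. a * x) = (\<lambda>x. b * x + t * e x)" using sL_decomp by blast
  then obtain r where "ordZ Y r e" using DB_get by blast
  then show ?thesis unfolding Qs_def using be DB_EB by blast
qed

lemma Qs_mono: "Qs a r \<Longrightarrow> r \<le> r' \<Longrightarrow> Qs a r'"
  unfolding Qs_def using ordZ_mono[OF Y_addf] by blast

lemma Qs_iA: "Qs (iA c) r"
proof -
  have "s (\<lambda>x. iA c * x) = (\<lambda>x. iB c * x + t * (\<lambda>x. 0) x)" using s_LiA by simp
  then show ?thesis unfolding Qs_def using EB_zero ordZ_zero[OF Y_addf] by blast
qed

end



context L9
begin

lemma S_ex: "\<exists>S. finite S \<and> alg_gen iA S = UNIV"
  using A_fg unfolding fin_gen_alg_def by blast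

lemma EB_tlin: "g \<in> EB \<Longrightarrow> g (t * x) = t * g x"
  using EB_iff gop_def tlin_def by blast

lemma Lt_EB_comm: "g \<in> EB \<Longrightarrow> (\<lambda>x. t * x) \<circ> g = g \<circ> (\<lambda>x. t * x)"
  using EB_tlin by (auto simp: comp_def)

lemma sL_comm: "s (\<lambda>x. a * x) \<circ> s (\<lambda>x. a' * x) = s (\<lambda>x. a' * x) \<circ> s (\<lambda>x. a * x)"
  using s_Lmult[of a a'] s_Lmult[of a' a] by (simp add: mult.commute)

lemma sub1: "D_B iB t \<subseteq> diffops UNIV (End_B iB t) (act_tens t n s) (tens n)"
proof
  fix d assume d: "d \<in> D_B iB t"
  then obtain m where dE: "d \<in> EB" and dm: "ordZ Y (Suc m) d" unfolding DB_char by blast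
  obtain S where S: "finite S" "alg_gen iA S = UNIV" using S_ex by blast
  obtain c where c: "\<forall>a\<in>S. Qs a c"
    using finite_bound[OF S(1), of Qs] Qs_ex Qs_mono by blast
  define Gs where "Gs = (\<lambda>a. s (\<lambda>x. a * x)) ` (S \<union> range iA) \<union> {(\<lambda>x. t * x)}"
  have GsE: "\<forall>g\<in>Gs. g \<in> EB" unfolding Gs_def using s_EB[OF DA_L] EB_L by auto
  have Gsg: "\<forall>g\<in>Gs. gop t g" using GsE EB_iff by blast
  have Gsa: "\<forall>g\<in>Gs. addf g" using Gsg gop_def by blast
  have Gsc: "\<forall>g\<in>Gs. \<forall>h\<in>Gs. g \<circ> h = h \<circ> g"
  proof (intro ballI)
    fix g h assume g: "g \<in> Gs" and h: "h \<in> Gs"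
    show "g \<circ> h = h \<circ> g"
    proof (cases "g = (\<lambda>x. t * x)")
      case True then show ?thesis using Lt_EB_comm GsE h by simp
    next
      case False
      show ?thesis
      proof (cases "h = (\<lambda>x. t * x)")
        case True then show ?thesis using Lt_EB_comm GsE g by simp
      next
        case False
        then obtain a' where "h = s (\<lambda>x. a' * x)" using h unfolding Gs_def by blast
        moreover obtain a where "g = s (\<lambda>x. a * x)" using g \<open>g \<noteq> _\<close> unfolding Gs_def by blast
        ultimately show ?thesis using sL_comm by simp
      qed
    qed
  qed
  have Gsp: "\<forall>g\<in>Gs. (\<forall>u. gop t u \<longrightarrow> ad g u = (\<lambda>x. 0)) \<or>
       (\<exists>S'. g = tp n t S' \<and> S' 0 \<in> Y \<and> (\<forall>l. gop t (S' l)) \<and> (\<forall>l. 1 \<le> l \<longrightarrow> ordZ Y (c * l) (S' l)))"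
  proof
    fix g assume g: "g \<in> Gs"
    show "(\<forall>u. gop t u \<longrightarrow> ad g u = (\<lambda>x. 0)) \<or>
       (\<exists>S'. g = tp n t S' \<and> S' 0 \<in> Y \<and> (\<forall>l. gop t (S' l)) \<and> (\<forall>l. 1 \<le> l \<longrightarrow> ordZ Y (c * l) (S' l)))"
    proof (cases "g = (\<lambda>x. t * x)")
      case True
      have "ad g u = (\<lambda>x. 0)" if "gop t u" for u
        using that True by (simp add: ad_def gop_def tlin_def)
      then show ?thesis by blast
    next
      case False
      then obtain a where a: "a \<in> S \<union> range iA" "g = s (\<lambda>x. a * x)" using g unfolding Gs_def by blast
      have "Qs a c" using a(1) c Qs_iA by blast
      then obtain b e where be: "e \<in> EB" "ordZ Y c e" "s (\<lambda>x. a * x) = (\<lambda>x. b * x + t * e x)"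
        unfolding Qs_def by blast
      define S' where "S' = (\<lambda>k::nat. if k = 0 then (\<lambda>x. b * x) else if k = 1 then e else (\<lambda>x. 0))"
      have "g = tp n t S'" unfolding S'_def tp01[OF t_nilp] using a(2) be(3) by simp
      moreover have "S' 0 \<in> Y" unfolding S'_def Y_def by simp
      moreover have "\<forall>l. gop t (S' l)"
        unfolding S'_def using be(1) EB_L EB_iff gop_zero by auto
      moreover have "\<forall>l. 1 \<le> l \<longrightarrow> ordZ Y (c * l) (S' l)"
        unfolding S'_def using be(2) ordZ_zero[OF Y_addf] by auto
      ultimately show ?thesis by blast
    qed
  qed
  define N where "N = Suc m + c * (Suc n - 0)"
  have "ordZ Gs N (\<lambda>x. t ^ 0 * d x)"
    using weight[OF t_nilp Y_gop Gsg Gsp] dE dm unfolding N_def EB_iff by blast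
  then have o1: "ordZ Gs N d" by simp
  have o2: "ordZ (clo Gs) N d" using clo_ordZ[OF Gsa Gsc] o1 dE EB_iff gop_def by blast
  have sLclo: "s (\<lambda>x. a * x) \<in> clo Gs" for a
  proof -
    have "a \<in> alg_gen iA S" using S(2) by simp
    then show ?thesis
    proof (induction a rule: alg_gen.induct)
      case (gen x) then show ?case unfolding Gs_def by (auto intro: clo.cg)
    next
      case (scal c) then show ?case unfolding Gs_def by (auto intro: clo.cg)
    next
      case (add x y) show ?case unfolding s_Ladd by (rule clo.cadd[OF add.IH])
    next
      case (mult x y) show ?case unfolding s_Lmult by (rule clo.ccomp[OF mult.IH])
    qed
  qed
  have zclo: "(\<lambda>x. 0) \<in> clo Gs" using sLclo[of "iA 0"] s_LiA iB_zero by simp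
  have tclo: "(\<lambda>x. t ^ j * x) \<in> clo Gs" for j
  proof (induction j)
    case 0 then show ?case using sLclo[of "iA 1"] s_LiA iB_one by simp
  next
    case (Suc j)
    have "(\<lambda>x. t * x) \<in> clo Gs" unfolding Gs_def by (auto intro: clo.cg)
    from clo.ccomp[OF this Suc] show ?case by (simp add: comp_def mult.assoc)
  qed
  have Xclo: "X \<subseteq> clo Gs"
  proof
    fix z assume "z \<in> X"
    then obtain f where z: "z = act_tens t n s f" unfolding X_def by blast
    have "(\<lambda>b. \<Sum>j\<in>J. t ^ j * s (\<lambda>x. f j * x) b) \<in> clo Gs" if "finite J" for J
      using that
    proof (induction J rule: finite_induct)
      case empty then show ?case using zclo by simp
    next
      case (insert j J)
      have "(\<lambda>x. t ^ j * x) \<circ> s (\<lambda>x. f j * x) \<in> clo Gs" by (rule clo.ccomp[OF tclo sLclo])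
      from clo.cadd[OF this insert.IH] show ?case using insert by (simp add: comp_def)
    qed
    then show "z \<in> clo Gs" unfolding z act_tens_def by blast
  qed
  have "ordZ X N d" using ordZ_set_mono[OF Xclo o2] .
  then show "d \<in> diffops UNIV (End_B iB t) (act_tens t n s) (tens n)"
    unfolding RHS_char N_def using dE by auto
qed

end



lemma tp_shift:
  fixes t :: "'b::ring_1"
  assumes tn: "t ^ Suc n = 0"
  shows "t * tp n t F x = tp n t (\<lambda>k. if k = 0 then (\<lambda>x. 0) else F (k - 1)) x"
proof (cases n)
  case 0
  then have "t = 0" using tn by simp
  then show ?thesis unfolding tp_def using 0 by simp
next
  case (Suc n')
  have "t * tp n t F x = (\<Sum>k\<le>n. t ^ Suc k * F k x)"
    unfolding tp_def by (simp add: sum_distrib_left mult.assoc)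
  also have "\<dots> = (\<Sum>k\<le>n'. t ^ Suc k * F k x)"
    using Suc tn by simp
  also have "\<dots> = tp n t (\<lambda>k. if k = 0 then (\<lambda>x. 0) else F (k - 1)) x"
    unfolding tp_def Suc by (subst sum.atMost_Suc_shift) simp
  finally show ?thesis .
qed

lemma tp_comp:
  fixes t :: "'b::ring_1"
  assumes tn: "t ^ Suc n = 0" and F: "\<forall>k. gop t (F k)"
  shows "tp n t F \<circ> tp n t G = tp n t (\<lambda>K x. \<Sum>k\<le>K. F k (G (K - k) x))"
proof
  fix x
  define h where "h = (\<lambda>(k::nat, k'::nat). t ^ (k + k') * F k (G k' x))"
  have "(tp n t F \<circ> tp n t G) x = (\<Sum>k\<le>n. t ^ k * F k (\<Sum>k'\<le>n. t ^ k' * G k' x))"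
    unfolding tp_def by simp
  also have "\<dots> = (\<Sum>k\<le>n. \<Sum>k'\<le>n. h (k, k'))"
  proof (intro sum.cong refl)
    fix k
    have aF: "addf (F k)" and tF: "tlin t (F k)" using F by (auto simp: gop_def)
    show "t ^ k * F k (\<Sum>k'\<le>n. t ^ k' * G k' x) = (\<Sum>k'\<le>n. h (k, k'))"
      unfolding h_def by (simp add: addf_sum[OF aF] tlin_pow[OF tF] sum_distrib_left mult.assoc[symmetric] power_add)
  qed
  also have "\<dots> = sum h ({..n} \<times> {..n})"
    by (simp add: sum.cartesian_product)
  also have "\<dots> = sum h {(i, j). i + j \<le> n}"
  proof (rule sum.mono_neutral_right)
    show "finite ({..n} \<times> {..n})" by simp
    show "{(i, j). i + j \<le> n} \<subseteq> {..n} \<times> {..n}" by auto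
    show "\<forall>i\<in>{..n} \<times> {..n} - {(i, j). i + j \<le> n}. h i = 0"
    proof
      fix p assume p: "p \<in> {..n} \<times> {..n} - {(i, j). i + j \<le> n}"
      obtain i j where ij: "p = (i, j)" by fastforce
      then have "Suc n \<le> i + j" using p by auto
      then have "t ^ (i + j) = 0" by (metis le_Suc_ex power_add tn mult_zero_left)
      then show "h p = 0" unfolding h_def ij by simp
    qed
  qed
  also have "\<dots> = (\<Sum>K\<le>n. \<Sum>k\<le>K. h (k, K - k))"
    using sum.triangle_reindex_eq[of "\<lambda>i j. h (i, j)" n] by (simp add: case_prod_beta')
  also have "\<dots> = tp n t (\<lambda>K x. \<Sum>k\<le>K. F k (G (K - k) x)) x"
    unfolding tp_def h_def by (intro sum.cong refl) (simp add: sum_distrib_left)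
  finally show "(tp n t F \<circ> tp n t G) x = tp n t (\<lambda>K x. \<Sum>k\<le>K. F k (G (K - k) x)) x" .
qed

lemma tp_plus:
  "(\<lambda>x. tp n t F x + tp n t G x) = tp n t (\<lambda>k x. F k x + G k x)"
  unfolding tp_def by (simp add: sum.distrib distrib_left)

lemma tp_single:
  "tp n t (\<lambda>k. if k = 0 then A0 else (\<lambda>x. 0)) = A0"
proof
  fix x
  have "tp n t (\<lambda>k. if k = 0 then A0 else (\<lambda>x. 0)) x = (\<Sum>k\<le>n. if k = 0 then A0 x else 0)"
    unfolding tp_def by (intro sum.cong refl) auto
  then show "tp n t (\<lambda>k. if k = 0 then A0 else (\<lambda>x. 0)) x = A0 x" by (simp add: sum.delta)
qed




context L9
begin

definition goodB :: "nat \<Rightarrow> 'b \<Rightarrow> bool" where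
  "goodB c b \<longleftrightarrow> (\<exists>D :: nat \<Rightarrow> 'a \<Rightarrow> 'a. (\<forall>k. D k \<in> D_A iA) \<and> (\<lambda>x. b * x) = tp n t (\<lambda>k. s (D k))
      \<and> D 0 \<in> LAs \<and> (\<forall>k. 1 \<le> k \<longrightarrow> ordZ LAs (c * k) (D k)))"

lemma s_neg: "D \<in> D_A iA \<Longrightarrow> s (\<lambda>x. - D x) = (\<lambda>x. - s D x)"
  using s_minus[OF DA_zero, of D] s_zero by simp

lemma good_iB: "goodB c (iB c')"
proof -
  define D where "D = (\<lambda>k::nat. if k = 0 then (\<lambda>x. iA c' * x) else (\<lambda>x. 0))"
  have eq: "(\<lambda>k. s (D k)) = (\<lambda>k. if k = 0 then (\<lambda>x. iB c' * x) else (\<lambda>x. 0))"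
    unfolding D_def using s_LiA s_zero by auto
  have "tp n t (\<lambda>k. s (D k)) = (\<lambda>x. iB c' * x)" unfolding eq by (rule tp_single)
  then have "(\<lambda>x. iB c' * x) = tp n t (\<lambda>k. s (D k))" by simp
  moreover have "\<forall>k. D k \<in> D_A iA" unfolding D_def using DA_L DA_zero by auto
  moreover have "D 0 \<in> LAs" unfolding D_def LAs_def by auto
  moreover have "\<forall>k. 1 \<le> k \<longrightarrow> ordZ LAs (c * k) (D k)" unfolding D_def using ordZ_zero[OF LAs_addf] by auto
  ultimately show ?thesis unfolding goodB_def by (intro exI[of _ D]) simp
qed

lemma good_t: "1 \<le> c \<Longrightarrow> goodB c t"
proof -
  assume c: "1 \<le> c"
  define D where "D = (\<lambda>k::nat. if k = 0 then (\<lambda>x::'a. 0) else if k = 1 then id else (\<lambda>x. 0))"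
  have eq: "(\<lambda>k. s (D k)) = (\<lambda>k. if k = 0 then (\<lambda>x. 0) else if k = 1 then id else (\<lambda>x. 0))"
    unfolding D_def using s_one s_zero by auto
  have "tp n t (\<lambda>k. s (D k)) = (\<lambda>x. 0 + t * id x)" unfolding eq by (rule tp01[OF t_nilp])
  then have "(\<lambda>x. t * x) = tp n t (\<lambda>k. s (D k))" by simp
  moreover have "\<forall>k. D k \<in> D_A iA" unfolding D_def using DA_L DA_zero DA_id by auto
  moreover have "D 0 \<in> LAs" unfolding D_def LAs_def by (rule image_eqI[of _ _ 0]) auto
  moreover have "\<forall>k. 1 \<le> k \<longrightarrow> ordZ LAs (c * k) (D k)"
  proof (intro allI impI)
    fix k :: nat assume k: "1 \<le> k"
    show "ordZ LAs (c * k) (D k)"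
    proof (cases "k = 1")
      case True
      then show ?thesis unfolding D_def using id_ordA ordZ_mono[OF LAs_addf, of "Suc 0" id "c * k"] c by simp
    next
      case False
      then show ?thesis unfolding D_def using k ordZ_zero[OF LAs_addf] by auto
    qed
  qed
  ultimately show ?thesis unfolding goodB_def by (intro exI[of _ D]) simp
qed

lemma good_plus: "goodB c b \<Longrightarrow> goodB c b' \<Longrightarrow> goodB c (b + b')"
proof -
  assume "goodB c b" "goodB c b'"
  then obtain D D' where D: "\<forall>k. D k \<in> D_A iA" "(\<lambda>x. b * x) = tp n t (\<lambda>k. s (D k))"
      "D 0 \<in> LAs" "\<forall>k. 1 \<le> k \<longrightarrow> ordZ LAs (c * k) (D k)"
    and D': "\<forall>k. D' k \<in> D_A iA" "(\<lambda>x. b' * x) = tp n t (\<lambda>k. s (D' k))"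
      "D' 0 \<in> LAs" "\<forall>k. 1 \<le> k \<longrightarrow> ordZ LAs (c * k) (D' k)"
    unfolding goodB_def by blast
  define D'' where "D'' = (\<lambda>k. (\<lambda>x. D k x + D' k x))"
  have "(\<lambda>x. (b + b') * x) = (\<lambda>x. tp n t (\<lambda>k. s (D k)) x + tp n t (\<lambda>k. s (D' k)) x)"
    using D(2) D'(2) by (metis distrib_right)
  also have "\<dots> = tp n t (\<lambda>k x. s (D k) x + s (D' k) x)" by (rule tp_plus)
  also have "\<dots> = tp n t (\<lambda>k. s (D'' k))"
    unfolding D''_def using s_plus D(1) D'(1) by simp
  finally have 1: "(\<lambda>x. (b + b') * x) = tp n t (\<lambda>k. s (D'' k))" .
  have 2: "\<forall>k. D'' k \<in> D_A iA" unfolding D''_def using DA_plus D(1) D'(1) by blast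
  obtain a a' where "D 0 = (\<lambda>x. a * x)" "D' 0 = (\<lambda>x. a' * x)" using D(3) D'(3) unfolding LAs_def by blast
  then have "D'' 0 = (\<lambda>x. (a + a') * x)" unfolding D''_def by (simp add: distrib_right)
  then have 3: "D'' 0 \<in> LAs" unfolding LAs_def by blast
  have 4: "\<forall>k. 1 \<le> k \<longrightarrow> ordZ LAs (c * k) (D'' k)"
    unfolding D''_def using D(4) D'(4) ordZ_add[OF LAs_addf] by blast
  show ?thesis unfolding goodB_def using 1 2 3 4 by (intro exI[of _ D'']) simp
qed

lemma ord_comp_bound:
  assumes "D \<in> D_A iA" "D' \<in> D_A iA" "ordZ LAs p D" "ordZ LAs q D'" "1 \<le> p" "1 \<le> q" "p + q - 1 \<le> r"
  shows "ordZ LAs r (D \<circ> D')"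
proof -
  obtain p' q' where pq: "p = Suc p'" "q = Suc q'" using assms(5,6) by (metis Suc_le_D One_nat_def)
  have o: "ordZ LAs (Suc (p' + q')) (D \<circ> D')"
    using ordZ_comp_A[OF DA_EA[OF assms(1)] DA_EA[OF assms(2)]] assms(3,4) pq by blast
  have "Suc (p' + q') \<le> r" using assms(7) pq by simp
  then show ?thesis by (rule ordZ_mono[OF LAs_addf o])
qed

lemma good_mult: "1 \<le> c \<Longrightarrow> goodB c b \<Longrightarrow> goodB c b' \<Longrightarrow> goodB c (b * b')"
proof -
  assume c: "1 \<le> c" and "goodB c b" "goodB c b'"
  then obtain D D' where D: "\<forall>k. D k \<in> D_A iA" "(\<lambda>x. b * x) = tp n t (\<lambda>k. s (D k))"
      "D 0 \<in> LAs" "\<forall>k. 1 \<le> k \<longrightarrow> ordZ LAs (c * k) (D k)"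
    and D': "\<forall>k. D' k \<in> D_A iA" "(\<lambda>x. b' * x) = tp n t (\<lambda>k. s (D' k))"
      "D' 0 \<in> LAs" "\<forall>k. 1 \<le> k \<longrightarrow> ordZ LAs (c * k) (D' k)"
    unfolding goodB_def by blast
  define D'' where "D'' = (\<lambda>K. (\<lambda>x. \<Sum>k\<le>K. (D k \<circ> D' (K - k)) x))"
  have gs: "\<forall>k. gop t (s (D k))" using D(1) s_EB EB_iff by blast
  have "(\<lambda>x. (b * b') * x) = (\<lambda>x. b * x) \<circ> (\<lambda>x. b' * x)" by (auto simp: mult.assoc)
  also have "\<dots> = tp n t (\<lambda>k. s (D k)) \<circ> tp n t (\<lambda>k. s (D' k))" using D(2) D'(2) by simp
  also have "\<dots> = tp n t (\<lambda>K x. \<Sum>k\<le>K. s (D k) (s (D' (K - k)) x))" by (rule tp_comp[OF t_nilp gs])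
  also have "\<dots> = tp n t (\<lambda>K. s (D'' K))"
  proof -
    have "s (D'' K) = (\<lambda>x. \<Sum>k\<le>K. s (D k) (s (D' (K - k)) x))" for K
    proof -
      have "s (D'' K) = (\<lambda>x. \<Sum>k\<le>K. s (D k \<circ> D' (K - k)) x)"
        unfolding D''_def using s_sum[of "{..K}" "\<lambda>k. D k \<circ> D' (K - k)"] DA_comp D(1) D'(1) by simp
      also have "\<dots> = (\<lambda>x. \<Sum>k\<le>K. s (D k) (s (D' (K - k)) x))"
        using s_comp D(1) D'(1) by simp
      finally show ?thesis .
    qed
    then show ?thesis by simp
  qed
  finally have 1: "(\<lambda>x. (b * b') * x) = tp n t (\<lambda>K. s (D'' K))" .
  have 2: "\<forall>K. D'' K \<in> D_A iA"
  proof
    fix K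
    have "\<forall>k\<in>{..K}. D k \<circ> D' (K - k) \<in> D_A iA" using DA_comp D(1) D'(1) by blast
    then show "D'' K \<in> D_A iA" unfolding D''_def by (intro DA_sum[OF finite_atMost])
  qed
  obtain a a' where aa: "D 0 = (\<lambda>x. a * x)" "D' 0 = (\<lambda>x. a' * x)" using D(3) D'(3) unfolding LAs_def by blast
  then have "D'' 0 = (\<lambda>x. (a * a') * x)" unfolding D''_def by (simp add: mult.assoc)
  then have 3: "D'' 0 \<in> LAs" unfolding LAs_def by blast
  have oD: "ordZ LAs (if k = 0 then 1 else c * k) (D k)" for k
    using D(4) aa(1) L_ordA by (cases "k = 0") auto
  have oD': "ordZ LAs (if k = 0 then 1 else c * k) (D' k)" for k
    using D'(4) aa(2) L_ordA by (cases "k = 0") auto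
  have 4: "\<forall>K. 1 \<le> K \<longrightarrow> ordZ LAs (c * K) (D'' K)"
  proof (intro allI impI)
    fix K :: nat assume K: "1 \<le> K"
    have "\<forall>k\<in>{..K}. ordZ LAs (c * K) (D k \<circ> D' (K - k))"
    proof
      fix k assume k: "k \<in> {..K}"
      let ?p = "if k = 0 then 1 else c * k" and ?q = "if K - k = 0 then 1 else c * (K - k)"
      have p1: "1 \<le> ?p" and q1: "1 \<le> ?q" using c by auto
      have "?p + ?q - 1 \<le> c * K"
      proof (cases "k = 0")
        case True then show ?thesis using K by simp
      next
        case False
        show ?thesis
        proof (cases "K - k = 0")
          case True then have "k = K" using k by simp
          then show ?thesis using False by simp
        next
          case False2: False
          have "c * k + c * (K - k) = c * K" using k by (simp add: distrib_left[symmetric])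
          then show ?thesis using False False2 by simp
        qed
      qed
      then show "ordZ LAs (c * K) (D k \<circ> D' (K - k))"
        using ord_comp_bound[OF _ _ oD oD' p1 q1] D(1) D'(1) by blast
    qed
    then show "ordZ LAs (c * K) (D'' K)" unfolding D''_def by (rule ordZ_sum[OF LAs_addf finite_atMost])
  qed
  show ?thesis unfolding goodB_def using 1 2 3 4 by (intro exI[of _ D'']) simp
qed

end



context L9
begin

definition Qg :: "'a \<Rightarrow> nat \<Rightarrow> bool" where
  "Qg a r \<longleftrightarrow> (\<exists>b (E :: nat \<Rightarrow> 'a \<Rightarrow> 'a). phi 0 b = a \<and> (\<forall>k. E k \<in> D_A iA) \<and> (\<forall>k. ordZ LAs r (E k)) \<and>
     (\<lambda>x. b * x) = (\<lambda>x. s (\<lambda>x. a * x) x - t * tp n t (\<lambda>k. s (E k)) x))"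

lemma Qg_mono: "Qg a r \<Longrightarrow> r \<le> r' \<Longrightarrow> Qg a r'"
  unfolding Qg_def using ordZ_mono[OF LAs_addf] by blast

lemma Qg_ex: "\<exists>r. Qg a r"
proof -
  obtain b e where be: "phi 0 b = a" "e \<in> D_B iB t" "s (\<lambda>x. a * x) = (\<lambda>x. b * x + t * e x)"
    using sL_decomp by blast
  obtain E where E: "\<forall>k. E k \<in> D_A iA" "e = tp n t (\<lambda>k. s (E k))" using expand[OF be(2)] by blast
  obtain r where r: "\<forall>k\<in>{..n}. ordZ LAs r (E k)"
    using finite_bound[of "{..n}" "\<lambda>k r. ordZ LAs r (E k)"] E(1) DA_get ordZ_mono[OF LAs_addf] by blast
  define E' where "E' = (\<lambda>k. if k \<le> n then E k else (\<lambda>x. 0))"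
  have 1: "\<forall>k. E' k \<in> D_A iA" unfolding E'_def using E(1) DA_zero by auto
  have 2: "\<forall>k. ordZ LAs r (E' k)" unfolding E'_def using r ordZ_zero[OF LAs_addf] by auto
  have "tp n t (\<lambda>k. s (E' k)) = tp n t (\<lambda>k. s (E k))"
    unfolding tp_def E'_def by (intro ext sum.cong refl) auto
  then have 3: "(\<lambda>x. b * x) = (\<lambda>x. s (\<lambda>x. a * x) x - t * tp n t (\<lambda>k. s (E' k)) x)"
    using be(3) E(2) by (simp add: fun_eq_iff)
  show ?thesis unfolding Qg_def using be(1) 1 2 3 by blast
qed

lemma good_S:
  assumes Q: "Qg a c0" and c: "c0 \<le> c" "1 \<le> c"
  shows "\<exists>b. phi 0 b = a \<and> goodB c b"
proof -
  obtain b E where bE: "phi 0 b = a" "\<forall>k. E k \<in> D_A iA" "\<forall>k. ordZ LAs c0 (E k)"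
    "(\<lambda>x. b * x) = (\<lambda>x. s (\<lambda>x. a * x) x - t * tp n t (\<lambda>k. s (E k)) x)"
    using Q unfolding Qg_def by blast
  define D where "D = (\<lambda>k. if k = 0 then (\<lambda>x. a * x) else (\<lambda>x. - E (k - 1) x))"
  have 1: "\<forall>k. D k \<in> D_A iA" unfolding D_def using DA_L DA_neg bE(2) by auto
  have "tp n t (\<lambda>k. s (D k)) x = s (\<lambda>x. a * x) x - t * tp n t (\<lambda>k. s (E k)) x" for x
  proof -
    have "t ^ k * s (D k) x = t ^ k * (if k = 0 then s (\<lambda>x. a * x) x else 0)
        - t ^ k * (if k = 0 then (\<lambda>x. 0) else (\<lambda>k. s (E k)) (k - 1)) x" for k
      unfolding D_def using s_neg bE(2) by (cases "k = 0") (auto simp: right_diff_distrib)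
    then have "tp n t (\<lambda>k. s (D k)) x = (\<Sum>k\<le>n. t ^ k * (if k = 0 then s (\<lambda>x. a * x) x else 0))
        - tp n t (\<lambda>k. if k = 0 then (\<lambda>x. 0) else (\<lambda>k. s (E k)) (k - 1)) x"
      unfolding tp_def by (simp add: sum_subtractf)
    also have "\<dots> = s (\<lambda>x. a * x) x - t * tp n t (\<lambda>k. s (E k)) x"
    proof -
      have "(\<Sum>k\<le>n. t ^ k * (if k = 0 then s (\<lambda>x. a * x) x else 0)) = (\<Sum>k\<le>n. if k = 0 then s (\<lambda>x. a * x) x else 0)"
        by (intro sum.cong refl) auto
      also have "\<dots> = s (\<lambda>x. a * x) x" by (simp add: sum.delta)
      finally show ?thesis using tp_shift[OF t_nilp, of "\<lambda>k. s (E k)" x] by simp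
    qed
    finally show ?thesis .
  qed
  then have 2: "(\<lambda>x. b * x) = tp n t (\<lambda>k. s (D k))" using bE(4) by (simp add: fun_eq_iff)
  have 3: "D 0 \<in> LAs" unfolding D_def LAs_def by simp
  have 4: "\<forall>k. 1 \<le> k \<longrightarrow> ordZ LAs (c * k) (D k)"
  proof (intro allI impI)
    fix k :: nat assume k: "1 \<le> k"
    have "c0 \<le> c * k" using c k by (metis dual_order.trans mult.right_neutral mult_le_mono2)
    then have "ordZ LAs (c * k) (E (k - 1))" using bE(3) ordZ_mono[OF LAs_addf] by blast
    then show "ordZ LAs (c * k) (D k)" unfolding D_def using k ordZ_neg[OF LAs_addf] by auto
  qed
  have "goodB c b" unfolding goodB_def using 1 2 3 4 by (intro exI[of _ D]) simp
  then show ?thesis using bE(1) by blast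
qed

lemma good_all: "\<exists>c. \<forall>b. goodB c b"
proof -
  obtain S where S: "finite S" "alg_gen iA S = UNIV" using S_ex by blast
  obtain c0 where c0: "\<forall>a\<in>S. Qg a c0"
    using finite_bound[OF S(1), of Qg] Qg_ex Qg_mono by blast
  define c where "c = max 1 c0"
  have c: "c0 \<le> c" "1 \<le> c" unfolding c_def by auto
  have lift: "\<exists>g. goodB c g \<and> phi 0 g = a" for a
  proof -
    have "a \<in> alg_gen iA S" using S(2) by simp
    then show ?thesis
    proof (induction a rule: alg_gen.induct)
      case (gen x) then show ?case using good_S[OF _ c] c0 by metis
    next
      case (scal c') then show ?case using good_iB phi0_iB by blast
    next
      case (add x y) then show ?case using good_plus phi0_add by metis
    next
      case (mult x y) then show ?case using good_mult[OF c(2)] phi0_mult by metis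
    qed
  qed
  have tpow: "goodB c (t ^ m)" for m
  proof (induction m)
    case 0 then show ?case using good_iB[of c 1] iB_one by simp
  next
    case (Suc m) then show ?case using good_mult[OF c(2) good_t[OF c(2)]] by simp
  qed
  have approx: "\<exists>g. goodB c g \<and> (\<exists>w. b - g = t ^ m * w)" for m b
  proof (induction m)
    case 0 then show ?case using good_iB[of c 0] iB_zero by (intro exI[of _ 0]) auto
  next
    case (Suc m)
    then obtain g w where gw: "goodB c g" "b - g = t ^ m * w" by blast
    obtain g' where g': "goodB c g'" "phi 0 g' = phi 0 w" using lift by blast
    then have "phi 0 (w - g') = 0" by (simp add: phi0_diff)
    then obtain v where v: "w - g' = t * v" using phi0_ker by blast
    have "goodB c (g + t ^ m * g')" using good_plus[OF gw(1) good_mult[OF c(2) tpow g'(1)]] .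
    moreover have "b - (g + t ^ m * g') = t ^ Suc m * v"
    proof -
      have "b - (g + t ^ m * g') = t ^ m * (w - g')" using gw(2) by (simp add: algebra_simps)
      then show ?thesis using v tpow_suc_mult by simp
    qed
    ultimately show ?case by blast
  qed
  have "goodB c b" for b
  proof -
    obtain g w where "goodB c g" "b - g = t ^ Suc n * w" using approx by blast
    then show ?thesis using t_nilp by simp
  qed
  then show ?thesis by blast
qed

lemma sub2: "diffops UNIV (End_B iB t) (act_tens t n s) (tens n) \<subseteq> D_B iB t"
proof
  fix d assume "d \<in> diffops UNIV (End_B iB t) (act_tens t n s) (tens n)"
  then obtain m where dE: "d \<in> EB" and dm: "ordZ X (Suc m) d" unfolding RHS_char by blast
  obtain c where c: "\<forall>b. goodB c b" using good_all by blast
  have Yp: "\<forall>g\<in>Y. (\<forall>u. gop t u \<longrightarrow> ad g u = (\<lambda>x. 0)) \<or>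
       (\<exists>S'. g = tp n t S' \<and> S' 0 \<in> X \<and> (\<forall>l. gop t (S' l)) \<and> (\<forall>l. 1 \<le> l \<longrightarrow> ordZ X (c * l) (S' l)))"
  proof
    fix g assume "g \<in> Y"
    then obtain b where b: "g = (\<lambda>x. b * x)" unfolding Y_def by blast
    obtain D where D: "\<forall>k. D k \<in> D_A iA" "(\<lambda>x. b * x) = tp n t (\<lambda>k. s (D k))"
      "D 0 \<in> LAs" "\<forall>k. 1 \<le> k \<longrightarrow> ordZ LAs (c * k) (D k)"
      using c unfolding goodB_def by blast
    obtain a where "D 0 = (\<lambda>x. a * x)" using D(3) unfolding LAs_def by blast
    then have "s (D 0) \<in> X" using sL_X by simp
    moreover have "\<forall>l. gop t (s (D l))" using D(1) s_EB EB_iff by blast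
    moreover have "\<forall>l. 1 \<le> l \<longrightarrow> ordZ X (c * l) (s (D l))" using D(1,4) s_ordX by blast
    ultimately show "(\<forall>u. gop t u \<longrightarrow> ad g u = (\<lambda>x. 0)) \<or>
       (\<exists>S'. g = tp n t S' \<and> S' 0 \<in> X \<and> (\<forall>l. gop t (S' l)) \<and> (\<forall>l. 1 \<le> l \<longrightarrow> ordZ X (c * l) (S' l)))"
      using b D(2) by (intro disjI2 exI[of _ "\<lambda>k. s (D k)"]) simp
  qed
  define N where "N = Suc m + c * (Suc n - 0)"
  have "ordZ Y N (\<lambda>x. t ^ 0 * d x)"
    using weight[OF t_nilp X_gop Y_gop Yp] dE dm unfolding N_def EB_iff by blast
  then have "ordZ Y N d" by simp
  then show "d \<in> D_B iB t" using DB_ordI[OF dE] by blast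
qed

lemma main: "D_B iB t = diffops UNIV (End_B iB t) (act_tens t n s) (tens n)"
  using sub1 sub2 by blast

end


theorem lemma9p7:
  fixes iA :: "'k::field \<Rightarrow> 'a::comm_ring_1"
    and iB :: "'k \<Rightarrow> 'b::ring_1"
    and t :: 'b
    and n :: nat
    and phi :: "nat \<Rightarrow> 'b \<Rightarrow> 'a"
    and s :: "('a \<Rightarrow> 'a) \<Rightarrow> ('b \<Rightarrow> 'b)"
  assumes A_alg: "ring_hom_fun iA"
    and A_fg: "fin_gen_alg iA"
    and B_alg: "ring_hom_fun iB"
    and iB_central: "\<forall>c b. iB c * b = b * iB c"
    and t_central: "\<forall>b. t * b = b * t"
    and t_nilp: "t ^ Suc n = 0"
    and grB: "gr_iso iA iB t n phi"
    and deform: "induces_deformation iA iB t n phi"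
    and s_into: "\<forall>d\<in>D_A iA. s d \<in> D_B iB t"
    and s_add: "\<forall>d\<in>D_A iA. \<forall>e\<in>D_A iA. s (\<lambda>x. d x + e x) = (\<lambda>x. s d x + s e x)"
    and s_mult: "\<forall>d\<in>D_A iA. \<forall>e\<in>D_A iA. s (d \<circ> e) = s d \<circ> s e"
    and s_one: "s id = id"
    and s_scal: "\<forall>c. \<forall>d\<in>D_A iA. s (\<lambda>x. iA c * d x) = (\<lambda>x. iB c * s d x)"
    and s_section: "\<forall>d\<in>D_A iA. residue phi (s d) = d"
  shows "D_B iB t = diffops UNIV (End_B iB t) (act_tens t n s) (tens n)"
proof -
  interpret L9 iA iB t n phi s
    unfolding L9_def using assms by blast
  show ?thesis by (rule main)
qed

end
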